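(* Let $d\ge 2$ and $n\ge d+2$. Then the good locus $\mathrm{good}(L_{d,n})$ is path-connected (in the standard topology).
   Context: Let $N=\binom n2$, coordinates of $\mathbb C^N$ indexed by edges $\{i,j\}$ of $K_n$. For a complex configuration ${\bf p}$ of $n$ points in $\mathbb C^d$, $m({\bf p})$ has coordinates $m_{ij}=\sum_{k=1}^d({\bf p}_i^k-{\bf p}_j^k)^2$ (no conjugation); $M_{d,n}$ is the image of $m$; $s$ is the coordinatewise squaring map on $\mathbb C^N$ and $L_{d,n}=s^{-1}(M_{d,n})$. Let $Z\subset\mathbb C^N$ be the set of points with at least one zero coordinate. The bad locus of $M_{d,n}$ is $\mathrm{sing}(M_{d,n})\cup(M_{d,n}\cap Z)$ (with $\mathrm{sing}$ the algebraic singular locus); the bad locus of $L_{d,n}$ is its preimage under $s$, and $\mathrm{good}(L_{d,n})$ is the complement of the bad locus in $L_{d,n}$. *)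

theory Defs
  imports "HOL-Analysis.Analysis"
begin

text \<open>The index set of the n points is a finite type 'n (n = CARD('n)),
 the ambient dimension is a finite type 'd (d = CARD('d)).
 C^N (coordinates indexed by edges {i,j} of K_n) is realised as the linear subspace
 of symmetric complex 'n x 'n matrices with zero diagonal; the coordinate of the edge
 {i,j} is x$i$j = x$j$i.\<close>

definition edge_space :: "(complex^'n^'n) set" where
  "edge_space = {x. \<forall>i j. x$i$j = x$j$i \<and> x$i$i = 0}"

definition meas :: "complex^'d^'n \<Rightarrow> complex^'n^'n" where
  "meas p = (\<chi> i j. \<Sum>k\<in>UNIV. (p$i$k - p$j$k)^2)"

definition M_set :: "('d::finite) itself \<Rightarrow> (complex^'n^'n) set" where
  "M_set _ = range (meas :: complex^'d^'n \<Rightarrow> complex^'n^'n)"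

definition sq_map :: "complex^'n^'n \<Rightarrow> complex^'n^'n" where
  "sq_map x = (\<chi> i j. (x$i$j)^2)"

definition L_set :: "('d::finite) itself \<Rightarrow> (complex^'n^'n) set" where
  "L_set D = {x \<in> edge_space. sq_map x \<in> M_set D}"

definition Z_set :: "(complex^'n^'n) set" where
  "Z_set = {x. \<exists>i j. i \<noteq> j \<and> x$i$j = 0}"

inductive_set poly_fun :: "(complex^'n^'n \<Rightarrow> complex) set" where
  const: "(\<lambda>x. c) \<in> poly_fun"
| coord: "(\<lambda>x. x$i$j) \<in> poly_fun"
| add: "f \<in> poly_fun \<Longrightarrow> g \<in> poly_fun \<Longrightarrow> (\<lambda>x. f x + g x) \<in> poly_fun"
| mult: "f \<in> poly_fun \<Longrightarrow> g \<in> poly_fun \<Longrightarrow> (\<lambda>x. f x * g x) \<in> poly_fun"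

text \<open>Vanishing ideal, Zariski tangent space, dimension, and the singular locus
 (Jacobian / tangent space criterion: x is singular iff dim T_x V > dim V, where
 dim V is the minimal tangent space dimension, which for an irreducible variety
 such as M_{d,n} is its dimension).  Dimensions are real dimensions, i.e. twice the
 complex dimensions, which does not affect the comparison.\<close>
definition vanishing_ideal :: "(complex^'n^'n) set \<Rightarrow> (complex^'n^'n \<Rightarrow> complex) set" where
  "vanishing_ideal V = {f \<in> poly_fun. \<forall>x\<in>V. f x = 0}"

definition zariski_tangent :: "(complex^'n^'n) set \<Rightarrow> complex^'n^'n \<Rightarrow> (complex^'n^'n) set" where
  "zariski_tangent V x = {v. \<forall>f \<in> vanishing_ideal V. frechet_derivative f (at x) v = 0}"

definition var_dim :: "(complex^'n^'n) set \<Rightarrow> nat" where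
  "var_dim V = (LEAST k. \<exists>y\<in>V. dim (zariski_tangent V y) = k)"

definition sing_locus :: "(complex^'n^'n) set \<Rightarrow> (complex^'n^'n) set" where
  "sing_locus V = {x \<in> V. dim (zariski_tangent V x) > var_dim V}"

definition bad_M :: "('d::finite) itself \<Rightarrow> (complex^'n^'n) set" where
  "bad_M D = sing_locus (M_set D) \<union> (M_set D \<inter> Z_set)"

definition bad_L :: "('d::finite) itself \<Rightarrow> (complex^'n^'n) set" where
  "bad_L D = {x \<in> L_set D. sq_map x \<in> bad_M D}"

definition good_L :: "('d::finite) itself \<Rightarrow> (complex^'n^'n) set" where
  "good_L D = L_set D - bad_L D"

end

theory Submission
  imports Defs "HOL-Computational_Algebra.Polynomial"
begin


lemma pf_const: "(\<lambda>x. c) \<in> poly_fun" by (rule poly_fun.const)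
lemma pf_coord: "(\<lambda>x. x$i$j) \<in> poly_fun" by (rule poly_fun.coord)
lemma pf_add: "f \<in> poly_fun \<Longrightarrow> g \<in> poly_fun \<Longrightarrow> (\<lambda>x. f x + g x) \<in> poly_fun" by (rule poly_fun.add)
lemma pf_mult: "f \<in> poly_fun \<Longrightarrow> g \<in> poly_fun \<Longrightarrow> (\<lambda>x. f x * g x) \<in> poly_fun" by (rule poly_fun.mult)
lemma pf_neg: "f \<in> poly_fun \<Longrightarrow> (\<lambda>x. - f x) \<in> poly_fun"
  using pf_mult[OF pf_const[of "-1"]] by simp
lemma pf_diff: "f \<in> poly_fun \<Longrightarrow> g \<in> poly_fun \<Longrightarrow> (\<lambda>x. f x - g x) \<in> poly_fun"
  using pf_add[OF _ pf_neg] by simp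
lemma pf_sum: "finite A \<Longrightarrow> (\<And>a. a \<in> A \<Longrightarrow> f a \<in> poly_fun) \<Longrightarrow> (\<lambda>x. \<Sum>a\<in>A. f a x) \<in> poly_fun"
  by (induction A rule: finite_induct) (auto intro: pf_add pf_const)
lemma pf_prod: "finite A \<Longrightarrow> (\<And>a. a \<in> A \<Longrightarrow> f a \<in> poly_fun) \<Longrightarrow> (\<lambda>x. \<Prod>a\<in>A. f a x) \<in> poly_fun"
  by (induction A rule: finite_induct) (auto intro: pf_mult pf_const)
lemma pf_power: "f \<in> poly_fun \<Longrightarrow> (\<lambda>x. (f x)^k) \<in> poly_fun"
  by (induction k) (auto intro: pf_mult pf_const)

lemma pf_cont: "f \<in> poly_fun \<Longrightarrow> continuous_on S f"
  by (induction rule: poly_fun.induct) (auto intro!: continuous_intros)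

lemma pf_subst:
  assumes "f \<in> poly_fun" "\<And>i j. (\<lambda>x. \<Phi> x $i$j) \<in> poly_fun"
  shows "(\<lambda>x. f (\<Phi> x)) \<in> poly_fun"
  using assms by (induction rule: poly_fun.induct) (auto intro: pf_add pf_mult pf_const)

lemma pf_deriv_ex:
  assumes "f \<in> poly_fun"
  shows "\<exists>D. (\<forall>x. (f has_derivative D x) (at x)) \<and> (\<forall>v. (\<lambda>x. D x v) \<in> poly_fun)"
  using assms
proof (induction rule: poly_fun.induct)
  case (const c)
  then show ?case by (intro exI[of _ "\<lambda>x v. 0"]) (auto intro: pf_const)
next
  case (coord i j)
  have "((\<lambda>x::complex^'a^'a. x$i$j) has_derivative (\<lambda>v. v$i$j)) (at x)" for x
    by (intro bounded_linear_imp_has_derivative bounded_linear_compose[OF bounded_linear_vec_nth bounded_linear_vec_nth])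
  then show ?case by (intro exI[of _ "\<lambda>x v. v$i$j"]) (auto intro: pf_const)
next
  case (add f g)
  then obtain Df Dg where "\<forall>x. (f has_derivative Df x) (at x)" "\<forall>v. (\<lambda>x. Df x v) \<in> poly_fun"
    "\<forall>x. (g has_derivative Dg x) (at x)" "\<forall>v. (\<lambda>x. Dg x v) \<in> poly_fun" by blast
  then show ?case
    by (intro exI[of _ "\<lambda>x v. Df x v + Dg x v"]) (auto intro!: derivative_intros pf_add)
next
  case (mult f g)
  then obtain Df Dg where "\<forall>x. (f has_derivative Df x) (at x)" "\<forall>v. (\<lambda>x. Df x v) \<in> poly_fun"
    "\<forall>x. (g has_derivative Dg x) (at x)" "\<forall>v. (\<lambda>x. Dg x v) \<in> poly_fun" by blast
  then show ?case
    by (intro exI[of _ "\<lambda>x v. f x * Dg x v + Df x v * g x"]) (auto intro!: derivative_intros pf_add pf_mult mult.hyps)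
qed

lemma pf_fd:
  assumes "f \<in> poly_fun"
  shows "(f has_derivative frechet_derivative f (at x)) (at x)"
    and "(\<lambda>y. frechet_derivative f (at y) v) \<in> poly_fun"
    and "linear (frechet_derivative f (at x))"
proof -
  obtain D where D: "\<forall>x. (f has_derivative D x) (at x)" "\<forall>v. (\<lambda>x. D x v) \<in> poly_fun"
    using pf_deriv_ex[OF assms] by blast
  have e: "frechet_derivative f (at y) = D y" for y using frechet_derivative_at D(1) by metis
  show "(f has_derivative frechet_derivative f (at x)) (at x)" using D e by simp
  show "(\<lambda>y. frechet_derivative f (at y) v) \<in> poly_fun" using D e by simp
  show "linear (frechet_derivative f (at x))" using D(1) e
    by (metis has_derivative_linear)
qed



abbreviation fd :: "(complex^'n^'n \<Rightarrow> complex) \<Rightarrow> complex^'n^'n \<Rightarrow> complex^'n^'n \<Rightarrow> complex"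
  where "fd f x \<equiv> frechet_derivative f (at x)"

lemma vi_poly: "f \<in> vanishing_ideal V \<Longrightarrow> f \<in> poly_fun"
  by (simp add: vanishing_ideal_def)

lemma zt_subspace: "subspace (zariski_tangent V x)"
proof -
  have lin: "linear (fd f x)" if "f \<in> vanishing_ideal V" for f
    using pf_fd(3)[OF vi_poly[OF that]] .
  show ?thesis unfolding subspace_def zariski_tangent_def
    using lin by (auto simp: linear_add linear_scale linear_0)
qed

lemma zt_linear_map:
  assumes lin: "linear \<Phi>" and pf: "\<And>i j. (\<lambda>x. \<Phi> x $i$j) \<in> poly_fun"
    and VV: "\<Phi> ` V \<subseteq> V" and inj: "inj_on \<Phi> (zariski_tangent V z)"
  shows "dim (zariski_tangent V z) \<le> dim (zariski_tangent V (\<Phi> z))"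
proof -
  have bl: "bounded_linear \<Phi>" using lin linear_conv_bounded_linear by blast
  have img: "\<Phi> ` zariski_tangent V z \<subseteq> zariski_tangent V (\<Phi> z)"
  proof
    fix w assume "w \<in> \<Phi> ` zariski_tangent V z"
    then obtain v where v: "v \<in> zariski_tangent V z" "w = \<Phi> v" by blast
    show "w \<in> zariski_tangent V (\<Phi> z)"
      unfolding zariski_tangent_def
    proof (intro CollectI ballI)
      fix f assume f: "f \<in> vanishing_ideal V"
      have fp: "f \<in> poly_fun" using vi_poly[OF f] .
      have gI: "(\<lambda>x. f (\<Phi> x)) \<in> vanishing_ideal V"
        using f VV pf_subst[OF fp pf] by (auto simp: vanishing_ideal_def)
      have "((\<lambda>x. f (\<Phi> x)) has_derivative (\<lambda>v. fd f (\<Phi> z) (\<Phi> v))) (at z)"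
        by (rule has_derivative_compose[OF bounded_linear_imp_has_derivative[OF bl] pf_fd(1)[OF fp]])
      then have "fd (\<lambda>x. f (\<Phi> x)) z = (\<lambda>v. fd f (\<Phi> z) (\<Phi> v))"
        using frechet_derivative_at by metis
      moreover have "fd (\<lambda>x. f (\<Phi> x)) z v = 0" using v(1) gI by (auto simp: zariski_tangent_def)
      ultimately show "fd f (\<Phi> z) w = 0" using v(2) by simp
    qed
  qed
  have "dim (\<Phi> ` zariski_tangent V z) = dim (zariski_tangent V z)"
    using dim_image_eq[OF lin] inj zt_subspace span_eq_iff by metis
  then show ?thesis using img dim_subset by metis
qed

lemma fd_expand:
  assumes "linear L"
  shows "L v = (\<Sum>b\<in>Basis. (v \<bullet> b) *\<^sub>R L b)"
proof -
  have "L v = L (\<Sum>b\<in>Basis. (v \<bullet> b) *\<^sub>R b)" by (subst euclidean_representation) (rule refl)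
  also have "\<dots> = (\<Sum>b\<in>Basis. (v \<bullet> b) *\<^sub>R L b)"
    using assms by (simp only: linear_sum[OF assms] linear_scale[OF assms])
  finally show ?thesis .
qed

lemma fd_joint_tendsto:
  assumes f: "f \<in> poly_fun" and y: "y \<longlonglongrightarrow> z" and w: "w \<longlonglongrightarrow> w0"
  shows "(\<lambda>n. fd f (y n) (w n)) \<longlonglongrightarrow> fd f z w0"
proof -
  have e: "fd f x v = (\<Sum>b\<in>Basis. (v \<bullet> b) *\<^sub>R fd f x b)" for x v
    using fd_expand[OF pf_fd(3)[OF f]] .
  have c: "(\<lambda>n. fd f (y n) b) \<longlonglongrightarrow> fd f z b" for b
  proof -
    have "continuous_on UNIV (\<lambda>x. fd f x b)" using pf_cont[OF pf_fd(2)[OF f]] .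
    then have "isCont (\<lambda>x. fd f x b) z" by (simp add: continuous_on_eq_continuous_at)
    then show ?thesis using isCont_tendsto_compose y by blast
  qed
  have l: "(\<lambda>n. \<Sum>b\<in>Basis. (w n \<bullet> b) *\<^sub>R fd f (y n) b) \<longlonglongrightarrow> (\<Sum>b\<in>Basis. (w0 \<bullet> b) *\<^sub>R fd f z b)"
    by (intro tendsto_sum tendsto_scaleR tendsto_inner w c tendsto_const)
  have eq1: "(\<lambda>n. fd f (y n) (w n)) = (\<lambda>n. \<Sum>b\<in>Basis. (w n \<bullet> b) *\<^sub>R fd f (y n) b)"
    by (rule ext) (rule e)
  show ?thesis using l by (simp only: eq1 e[of z w0, symmetric])
qed

lemma zt_semicont:
  "\<exists>e>0. \<forall>y. dist y z < e \<longrightarrow> dim (zariski_tangent V y) \<le> dim (zariski_tangent V z)"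
proof (rule ccontr)
  define Tz where "Tz = zariski_tangent V z"
  define W where "W = {y. \<forall>x\<in>Tz. orthogonal x y}"
  have sTz: "subspace Tz" unfolding Tz_def by (rule zt_subspace)
  have sW: "subspace W" unfolding W_def orthogonal_def
    by (auto simp: subspace_def inner_add_right)
  have dW: "dim W + dim Tz = DIM(complex^'a^'a)"
    using dim_subspace_orthogonal_to_vectors[OF sTz subspace_UNIV] unfolding W_def
    by (simp add: dim_UNIV)
  assume "\<not> ?thesis"
  then have "\<forall>n::nat. \<exists>y. dist y z < 1 / Suc n \<and> dim (zariski_tangent V y) > dim Tz"
    unfolding Tz_def by (metis not_le of_nat_0_less_iff zero_less_Suc divide_pos_pos zero_less_one)
  then obtain ys where ys: "\<And>n. dist (ys n) z < 1 / Suc n" "\<And>n. dim (zariski_tangent V (ys n)) > dim Tz"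
    by metis
  have yb: "\<And>n. dist (ys n) z \<le> 1 / Suc n" using ys(1) less_imp_le by blast
  have yz: "ys \<longlonglongrightarrow> z"
  proof (rule tendsto_dist_iff[THEN iffD2], rule tendsto_sandwich[of "\<lambda>n. 0" _ _ "\<lambda>n. 1 / Suc n"])
    show "\<forall>\<^sub>F n in sequentially. 0 \<le> dist (ys n) z" by simp
    show "\<forall>\<^sub>F n in sequentially. dist (ys n) z \<le> 1 / Suc n" using yb by simp
    show "(\<lambda>n. 0) \<longlonglongrightarrow> (0::real)" by simp
    show "(\<lambda>n. 1 / real (Suc n)) \<longlonglongrightarrow> 0" using LIMSEQ_inverse_real_of_nat by (simp add: inverse_eq_divide)
  qed
  have "\<exists>w. w \<in> zariski_tangent V (ys n) \<and> w \<in> W \<and> norm w = 1" for n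
  proof -
    let ?A = "zariski_tangent V (ys n)"
    have sA: "subspace ?A" by (rule zt_subspace)
    have "dim {x + y |x y. x \<in> ?A \<and> y \<in> W} + dim (?A \<inter> W) = dim ?A + dim W"
      by (rule dim_sums_Int[OF sA sW])
    moreover have "dim {x + y |x y. x \<in> ?A \<and> y \<in> W} \<le> DIM(complex^'a^'a)"
      by (rule dim_subset_UNIV)
    ultimately have "dim (?A \<inter> W) > 0" using ys(2)[of n] dW by linarith
    then have "\<not> (?A \<inter> W \<subseteq> {0})" using dim_eq_0 by (metis neq0_conv)
    then obtain w where w: "w \<in> ?A \<inter> W" "w \<noteq> 0" by blast
    have "w /\<^sub>R norm w \<in> ?A" using w sA by (simp add: subspace_scale)
    moreover have "w /\<^sub>R norm w \<in> W" using w sW by (simp add: subspace_scale)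
    ultimately show ?thesis using w(2) by (intro exI[of _ "w /\<^sub>R norm w"]) auto
  qed
  then obtain ws where ws: "\<And>n. ws n \<in> zariski_tangent V (ys n)" "\<And>n. ws n \<in> W" "\<And>n. norm (ws n) = 1"
    by metis
  have "seq_compact (sphere (0::complex^'a^'a) 1)" by (intro compact_imp_seq_compact compact_sphere)
  moreover have "\<forall>n. ws n \<in> sphere 0 1" using ws(3) by simp
  ultimately obtain w0 r where w0: "w0 \<in> sphere 0 1" "strict_mono r" "(ws \<circ> r) \<longlonglongrightarrow> w0"
    using seq_compactE by metis
  have yr: "(ys \<circ> r) \<longlonglongrightarrow> z" using LIMSEQ_subseq_LIMSEQ[OF yz w0(2)] .
  have "w0 \<in> Tz" unfolding Tz_def zariski_tangent_def
  proof (intro CollectI ballI)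
    fix f assume f: "f \<in> vanishing_ideal V"
    have "(\<lambda>n. fd f ((ys \<circ> r) n) ((ws \<circ> r) n)) \<longlonglongrightarrow> fd f z w0"
      by (rule fd_joint_tendsto[OF vi_poly[OF f] yr w0(3)])
    moreover have "fd f ((ys \<circ> r) n) ((ws \<circ> r) n) = 0" for n
      using ws(1)[of "r n"] f by (auto simp: zariski_tangent_def)
    ultimately have "(\<lambda>n. 0::complex) \<longlonglongrightarrow> fd f z w0" by simp
    then show "fd f z w0 = 0" by (simp add: LIMSEQ_const_iff)
  qed
  moreover have "w0 \<in> W" unfolding W_def
  proof (intro CollectI ballI)
    fix x assume x: "x \<in> Tz"
    have "(\<lambda>n. x \<bullet> (ws \<circ> r) n) \<longlonglongrightarrow> x \<bullet> w0" by (intro tendsto_inner tendsto_const w0(3))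
    moreover have "x \<bullet> (ws \<circ> r) n = 0" for n using ws(2)[of "r n"] x by (auto simp: W_def orthogonal_def)
    ultimately have "(\<lambda>n. 0::real) \<longlonglongrightarrow> x \<bullet> w0" by simp
    then have "x \<bullet> w0 = 0" by (simp add: LIMSEQ_const_iff)
    then show "orthogonal x w0" by (simp add: orthogonal_def)
  qed
  ultimately have "orthogonal w0 w0" unfolding W_def by blast
  then have "w0 \<bullet> w0 = 0" by (simp add: orthogonal_def)
  then have "w0 = 0" by simp
  then show False using w0(1) by simp
qed



definition gam :: "'n \<Rightarrow> complex^'n^'n \<Rightarrow> complex^'n^'n" where
  "gam b x = (\<chi> k l. (x$b$k + x$b$l - x$k$l) / 2)"
definition lam :: "complex^'n^'n \<Rightarrow> complex^'n^'n" where
  "lam G = (\<chi> k l. G$k$k + G$l$l - G$k$l - G$l$k)"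
definition cg :: "complex^'n^'n \<Rightarrow> complex^'n^'n \<Rightarrow> complex^'n^'n" where
  "cg B G = (\<chi> k l. \<Sum>r\<in>UNIV. \<Sum>s\<in>UNIV. B$k$r * G$r$s * B$l$s)"
definition gram :: "complex^'d^'n \<Rightarrow> complex^'n^'n" where
  "gram U = (\<chi> k l. \<Sum>m\<in>UNIV. U$k$m * U$l$m)"
definition rk1 :: "complex^'n \<Rightarrow> complex^'n^'n" where
  "rk1 c = (\<chi> k l. c$k + c$l)"
definition phiB :: "'n \<Rightarrow> complex^'n^'n \<Rightarrow> complex^'n^'n \<Rightarrow> complex^'n^'n" where
  "phiB b B x = lam (cg B (gam b x))"
definition affm :: "complex^'n^'n \<Rightarrow> bool" where
  "affm B \<longleftrightarrow> (\<forall>k. (\<Sum>l\<in>UNIV. B$k$l) = 1)"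
definition symm :: "complex^'n^'n \<Rightarrow> bool" where
  "symm G \<longleftrightarrow> (\<forall>k l. G$k$l = G$l$k)"

lemma gam_meas:
  "gam b (meas p) = gram (\<chi> k m. p$k$m - p$b$m)"
proof -
  have "(meas p $b$k + meas p $b$l - meas p $k$l) / 2 = (\<Sum>m\<in>UNIV. (p$k$m - p$b$m) * (p$l$m - p$b$m))" for k l
  proof -
    have "(meas p $b$k + meas p $b$l - meas p $k$l) / 2
       = (\<Sum>m\<in>UNIV. ((p$b$m - p$k$m)^2 + (p$b$m - p$l$m)^2 - (p$k$m - p$l$m)^2)) / 2"
      by (simp add: meas_def sum.distrib sum_subtractf)
    also have "\<dots> = (\<Sum>m\<in>UNIV. ((p$b$m - p$k$m)^2 + (p$b$m - p$l$m)^2 - (p$k$m - p$l$m)^2) / 2)"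
      by (rule sum_divide_distrib)
    also have "\<dots> = (\<Sum>m\<in>UNIV. (p$k$m - p$b$m) * (p$l$m - p$b$m))"
      by (rule sum.cong) (auto simp: power2_eq_square field_simps)
    finally show ?thesis .
  qed
  then show ?thesis by (simp add: gam_def gram_def vec_eq_iff)
qed

lemma lam_gram: "lam (gram V) = meas V"
proof -
  have "(\<Sum>m\<in>UNIV. V$k$m * V$k$m) + (\<Sum>m\<in>UNIV. V$l$m * V$l$m) - (\<Sum>m\<in>UNIV. V$k$m * V$l$m) - (\<Sum>m\<in>UNIV. V$l$m * V$k$m)
     = (\<Sum>m\<in>UNIV. (V$k$m - V$l$m)^2)" for k l
    by (simp add: sum.distrib[symmetric] sum_subtractf[symmetric] power2_eq_square algebra_simps)
  then show ?thesis by (simp add: lam_def gram_def meas_def vec_eq_iff)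
qed

lemma meas_translate: "meas (\<chi> k m. V$k$m - c$m) = meas V"
  by (simp add: meas_def vec_eq_iff)

lemma affm_mult:
  assumes "affm B"
  shows "B ** (\<chi> k m. p$k$m - p$b$m) = (\<chi> k m. (B ** p)$k$m - p$b$m)"
proof -
  have "(\<Sum>l\<in>UNIV. B$k$l * (p$l$m - p$b$m)) = (\<Sum>l\<in>UNIV. B$k$l * p$l$m) - p$b$m" for k m
  proof -
    have e: "(\<Sum>l\<in>UNIV. B$k$l * p$b$m) = (\<Sum>l\<in>UNIV. B$k$l) * p$b$m" by (rule sum_distrib_right[symmetric])
    have "(\<Sum>l\<in>UNIV. B$k$l * (p$l$m - p$b$m)) = (\<Sum>l\<in>UNIV. B$k$l * p$l$m) - (\<Sum>l\<in>UNIV. B$k$l * p$b$m)"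
      by (simp add: right_diff_distrib sum_subtractf)
    then have "(\<Sum>l\<in>UNIV. B$k$l * (p$l$m - p$b$m)) = (\<Sum>l\<in>UNIV. B$k$l * p$l$m) - (\<Sum>l\<in>UNIV. B$k$l) * p$b$m"
      using e by simp
    then show ?thesis using assms by (simp add: affm_def)
  qed
  then show ?thesis by (simp add: matrix_matrix_mult_def vec_eq_iff)
qed

lemma cg_gram: "cg B (gram U) = gram (B ** U)"
proof -
  have "(\<Sum>m\<in>UNIV. (\<Sum>r\<in>UNIV. B$k$r * U$r$m) * (\<Sum>s\<in>UNIV. B$l$s * U$s$m))
      = (\<Sum>r\<in>UNIV. \<Sum>s\<in>UNIV. B$k$r * (\<Sum>m\<in>UNIV. U$r$m * U$s$m) * B$l$s)" for k l
  proof -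
    have "(\<Sum>m\<in>UNIV. (\<Sum>r\<in>UNIV. B$k$r * U$r$m) * (\<Sum>s\<in>UNIV. B$l$s * U$s$m))
       = (\<Sum>m\<in>UNIV. \<Sum>r\<in>UNIV. \<Sum>s\<in>UNIV. B$k$r * U$r$m * (B$l$s * U$s$m))"
      by (simp add: sum_product)
    also have "\<dots> = (\<Sum>r\<in>UNIV. \<Sum>m\<in>UNIV. \<Sum>s\<in>UNIV. B$k$r * U$r$m * (B$l$s * U$s$m))"
      by (rule sum.swap)
    also have "\<dots> = (\<Sum>r\<in>UNIV. \<Sum>s\<in>UNIV. \<Sum>m\<in>UNIV. B$k$r * U$r$m * (B$l$s * U$s$m))"
      by (rule sum.cong[OF refl], rule sum.swap)
    also have "\<dots> = (\<Sum>r\<in>UNIV. \<Sum>s\<in>UNIV. B$k$r * (\<Sum>m\<in>UNIV. U$r$m * U$s$m) * B$l$s)"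
      by (simp add: sum_distrib_left sum_distrib_right algebra_simps)
    finally show ?thesis .
  qed
  then show ?thesis by (simp add: cg_def gram_def matrix_matrix_mult_def vec_eq_iff)
qed

lemma phiB_meas:
  assumes "affm B"
  shows "phiB b B (meas p) = meas (B ** p)"
  unfolding phiB_def gam_meas cg_gram affm_mult[OF assms] lam_gram meas_translate ..

lemma phiB_M: "affm B \<Longrightarrow> phiB b B ` M_set TYPE('d::finite) \<subseteq> M_set TYPE('d)"
  by (auto simp: M_set_def phiB_meas)


lemma pf_divc: "f \<in> poly_fun \<Longrightarrow> (\<lambda>x. f x / c) \<in> poly_fun"
  using pf_mult[OF _ pf_const[of "1/c"]] by simp

lemma pf_gam: "(\<lambda>x. gam b x $i$j) \<in> poly_fun"
  unfolding gam_def by (simp, intro pf_divc pf_diff pf_add pf_coord)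

lemma pf_cg: "(\<And>r s. (\<lambda>x. G x $r$s) \<in> poly_fun) \<Longrightarrow> (\<lambda>x. cg B (G x) $k$l) \<in> poly_fun"
  unfolding cg_def by (simp, intro pf_sum pf_mult pf_const, auto)

lemma pf_lam: "(\<And>r s. (\<lambda>x. G x $r$s) \<in> poly_fun) \<Longrightarrow> (\<lambda>x. lam (G x) $k$l) \<in> poly_fun"
  unfolding lam_def by (simp, intro pf_diff pf_add, auto)

lemma pf_phiB: "(\<lambda>x. phiB b B x $k$l) \<in> poly_fun"
  unfolding phiB_def by (intro pf_lam pf_cg pf_gam)

lemma cscale: "c *\<^sub>R (z::complex) = of_real c * z" by (simp add: scaleR_conv_of_real)

lemma linear_gam: "linear (gam b)"
  by (rule linearI) (auto simp: gam_def vec_eq_iff cscale field_simps)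

lemma linear_lam: "linear lam"
  by (rule linearI) (auto simp: lam_def vec_eq_iff cscale field_simps)

lemma linear_cg: fixes B :: "complex^'n^'n" shows "linear (cg B)"
proof (rule linearI)
  fix G H :: "complex^'n^'n"
  show "cg B (G + H) = cg B G + cg B H"
    by (simp add: cg_def vec_eq_iff distrib_left distrib_right sum.distrib)
next
  fix c :: real and G :: "complex^'n^'n"
  show "cg B (c *\<^sub>R G) = c *\<^sub>R cg B G"
    by (simp add: cg_def vec_eq_iff cscale sum_distrib_left mult_ac)
qed

lemma linear_phiB: "linear (phiB b B)"
proof -
  have "phiB b B = lam \<circ> cg B \<circ> gam b" by (rule ext) (simp add: phiB_def)
  then show ?thesis using linear_compose[OF linear_gam linear_compose[OF linear_cg linear_lam]] by (simp add: o_assoc)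
qed

lemma lam_gam: "x \<in> edge_space \<Longrightarrow> lam (gam b x) = x"
  by (auto simp: edge_space_def lam_def gam_def vec_eq_iff field_simps)

lemma gam_lam: "symm G \<Longrightarrow> gam b (lam G) = G - rk1 (\<chi> k. G$b$k - G$b$b / 2)"
  by (auto simp: symm_def lam_def gam_def rk1_def vec_eq_iff field_simps)

lemma lam_rk1: "lam (rk1 c) = 0"
  by (simp add: lam_def rk1_def vec_eq_iff)

lemma lam_diff: "lam (G - H) = lam G - lam H"
  by (simp add: lam_def vec_eq_iff)

lemma cg_diff: "cg B (G - H) = cg B G - cg B H"
  by (simp add: cg_def vec_eq_iff right_diff_distrib left_diff_distrib sum_subtractf)

lemma cg_rk1:
  assumes "affm C"
  shows "cg C (rk1 c) = rk1 (C *v c)"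
proof -
  have "(\<Sum>r\<in>UNIV. \<Sum>s\<in>UNIV. C$k$r * (c$r + c$s) * C$l$s)
       = (\<Sum>r\<in>UNIV. C$k$r * c$r) + (\<Sum>s\<in>UNIV. C$l$s * c$s)" for k l
  proof -
    have "(\<Sum>r\<in>UNIV. \<Sum>s\<in>UNIV. C$k$r * (c$r + c$s) * C$l$s)
       = (\<Sum>r\<in>UNIV. \<Sum>s\<in>UNIV. C$k$r * c$r * C$l$s) + (\<Sum>r\<in>UNIV. \<Sum>s\<in>UNIV. C$k$r * (C$l$s * c$s))"
      by (simp add: algebra_simps sum.distrib)
    also have "\<dots> = (\<Sum>r\<in>UNIV. C$k$r * c$r * (\<Sum>s\<in>UNIV. C$l$s)) + (\<Sum>r\<in>UNIV. C$k$r * (\<Sum>s\<in>UNIV. C$l$s * c$s))"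
      by (simp add: sum_distrib_left)
    also have "\<dots> = (\<Sum>r\<in>UNIV. C$k$r * c$r) * (\<Sum>s\<in>UNIV. C$l$s) + (\<Sum>r\<in>UNIV. C$k$r) * (\<Sum>s\<in>UNIV. C$l$s * c$s)"
      by (simp only: sum_distrib_right[symmetric])
    also have "\<dots> = (\<Sum>r\<in>UNIV. C$k$r * c$r) + (\<Sum>r\<in>UNIV. C$k$r) * (\<Sum>s\<in>UNIV. C$l$s * c$s)"
      using assms by (simp add: affm_def)
    also have "\<dots> = (\<Sum>r\<in>UNIV. C$k$r * c$r) + (\<Sum>s\<in>UNIV. C$l$s * c$s)"
      using assms by (simp add: affm_def)
    finally show ?thesis .
  qed
  then show ?thesis
    by (simp add: cg_def rk1_def vec_eq_iff matrix_vector_mult_def)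
qed

lemma cg_comp: "cg C (cg B G) = cg (C ** B) G"
proof -
  have "(\<Sum>r\<in>UNIV. \<Sum>s\<in>UNIV. C$k$r * (\<Sum>r'\<in>UNIV. \<Sum>s'\<in>UNIV. B$r$r' * G$r'$s' * B$s$s') * C$l$s)
     = (\<Sum>r'\<in>UNIV. \<Sum>s'\<in>UNIV. (\<Sum>r\<in>UNIV. C$k$r * B$r$r') * G$r'$s' * (\<Sum>s\<in>UNIV. C$l$s * B$s$s'))" for k l
  proof -
    have "(\<Sum>r\<in>UNIV. \<Sum>s\<in>UNIV. C$k$r * (\<Sum>r'\<in>UNIV. \<Sum>s'\<in>UNIV. B$r$r' * G$r'$s' * B$s$s') * C$l$s)
       = (\<Sum>r\<in>UNIV. \<Sum>s\<in>UNIV. \<Sum>r'\<in>UNIV. \<Sum>s'\<in>UNIV. C$k$r * B$r$r' * G$r'$s' * (C$l$s * B$s$s'))"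
      by (simp add: sum_distrib_left sum_distrib_right mult_ac)
    also have "\<dots> = (\<Sum>r\<in>UNIV. \<Sum>r'\<in>UNIV. \<Sum>s\<in>UNIV. \<Sum>s'\<in>UNIV. C$k$r * B$r$r' * G$r'$s' * (C$l$s * B$s$s'))"
      by (rule sum.cong[OF refl], rule sum.swap)
    also have "\<dots> = (\<Sum>r'\<in>UNIV. \<Sum>r\<in>UNIV. \<Sum>s\<in>UNIV. \<Sum>s'\<in>UNIV. C$k$r * B$r$r' * G$r'$s' * (C$l$s * B$s$s'))"
      by (rule sum.swap)
    also have "\<dots> = (\<Sum>r'\<in>UNIV. \<Sum>r\<in>UNIV. \<Sum>s'\<in>UNIV. \<Sum>s\<in>UNIV. C$k$r * B$r$r' * G$r'$s' * (C$l$s * B$s$s'))"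
      by (rule sum.cong[OF refl], rule sum.cong[OF refl], rule sum.swap)
    also have "\<dots> = (\<Sum>r'\<in>UNIV. \<Sum>s'\<in>UNIV. \<Sum>r\<in>UNIV. \<Sum>s\<in>UNIV. C$k$r * B$r$r' * G$r'$s' * (C$l$s * B$s$s'))"
      by (rule sum.cong[OF refl], rule sum.swap)
    also have "\<dots> = (\<Sum>r'\<in>UNIV. \<Sum>s'\<in>UNIV. (\<Sum>r\<in>UNIV. C$k$r * B$r$r') * G$r'$s' * (\<Sum>s\<in>UNIV. C$l$s * B$s$s'))"
      by (simp add: sum_product sum_distrib_left sum_distrib_right mult_ac)
    finally show ?thesis .
  qed
  then show ?thesis by (simp add: cg_def matrix_matrix_mult_def vec_eq_iff)
qed

lemma if_mult1: "(if P then 1 else 0) * (y::complex) = (if P then y else 0)" by simp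
lemma if_mult2: "(y::complex) * (if P then 1 else 0) = (if P then y else 0)" by simp

lemma cg_id: fixes G :: "complex^'n^'n" shows "cg (mat 1) G = G"
  by (simp add: cg_def vec_eq_iff mat_def if_mult1 if_mult2 cong: if_cong)

lemma symm_gam: "x \<in> edge_space \<Longrightarrow> symm (gam b x)"
  by (auto simp: edge_space_def symm_def gam_def)

lemma symm_cg: "symm G \<Longrightarrow> symm (cg B G)"
  unfolding symm_def cg_def by (simp, subst sum.swap, auto simp: mult_ac)

lemma affm_inv: "affm B \<Longrightarrow> C ** B = mat 1 \<Longrightarrow> affm C"
proof -
  assume B: "affm B" and CB: "C ** B = mat 1"
  have "(\<Sum>l\<in>UNIV. C$k$l) = 1" for k
  proof -
    have "(\<Sum>l\<in>UNIV. C$k$l) = (\<Sum>l\<in>UNIV. C$k$l * (\<Sum>j\<in>UNIV. B$l$j))" using B by (simp add: affm_def)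
    also have "\<dots> = (\<Sum>j\<in>UNIV. (C ** B)$k$j)"
      by (simp add: matrix_matrix_mult_def sum_distrib_left) (rule sum.swap)
    also have "\<dots> = 1" using CB by (simp add: mat_def)
    finally show ?thesis .
  qed
  then show ?thesis by (simp add: affm_def)
qed

lemma phiB_inv:
  assumes B: "affm B" and CB: "C ** B = mat 1" and x: "x \<in> edge_space"
  shows "phiB b C (phiB b B x) = x"
proof -
  have C: "affm C" using affm_inv[OF B CB] .
  define H where "H = cg B (gam b x)"
  have sH: "symm H" unfolding H_def using symm_cg symm_gam x by blast
  have "phiB b C (phiB b B x) = lam (cg C (gam b (lam H)))" by (simp add: phiB_def H_def)
  also have "\<dots> = lam (cg C H) - lam (rk1 (C *v (\<chi> k. H$b$k - H$b$b / 2)))"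
    by (simp add: gam_lam[OF sH] cg_diff lam_diff cg_rk1[OF C])
  also have "\<dots> = lam (cg C H)" by (simp add: lam_rk1)
  also have "\<dots> = lam (gam b x)" by (simp add: H_def cg_comp CB cg_id)
  also have "\<dots> = x" using lam_gam[OF x] .
  finally show ?thesis .
qed



definition lin :: "complex^'d^'n \<Rightarrow> complex^'d^'n \<Rightarrow> complex \<Rightarrow> complex^'d^'n" where
  "lin p v t = (\<chi> k m. p$k$m + t * v$k$m)"

definition lpoly :: "(complex^'d^'n \<Rightarrow> complex) \<Rightarrow> bool" where
  "lpoly F \<longleftrightarrow> (\<forall>p v. \<exists>c. \<forall>t. F (lin p v t) = poly c t)"

lemma lin_0[simp]: "lin p v 0 = p" by (simp add: lin_def vec_eq_iff)
lemma lin_1[simp]: "lin p (q - p) 1 = q" by (simp add: lin_def vec_eq_iff)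

lemma lpoly_const: "lpoly (\<lambda>p. a)"
  unfolding lpoly_def by (intro allI exI[of _ "[:a:]"]) simp

lemma lpoly_coord: "lpoly (\<lambda>p. p$k$m)"
  unfolding lpoly_def by (intro allI, rename_tac p v, rule_tac x="[:p$k$m, v$k$m:]" in exI) (simp add: lin_def)

lemma lpoly_add: "lpoly F \<Longrightarrow> lpoly G \<Longrightarrow> lpoly (\<lambda>p. F p + G p)"
  unfolding lpoly_def by (metis poly_add)

lemma lpoly_mult: "lpoly F \<Longrightarrow> lpoly G \<Longrightarrow> lpoly (\<lambda>p. F p * G p)"
  unfolding lpoly_def by (metis poly_mult)

lemma lpoly_diff: "lpoly F \<Longrightarrow> lpoly G \<Longrightarrow> lpoly (\<lambda>p. F p - G p)"
  unfolding lpoly_def by (metis poly_diff)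

lemma lpoly_sum: "finite A \<Longrightarrow> (\<And>a. a \<in> A \<Longrightarrow> lpoly (F a)) \<Longrightarrow> lpoly (\<lambda>p. \<Sum>a\<in>A. F a p)"
  by (induction A rule: finite_induct) (auto intro: lpoly_add lpoly_const)

lemma lpoly_prod: "finite A \<Longrightarrow> (\<And>a. a \<in> A \<Longrightarrow> lpoly (F a)) \<Longrightarrow> lpoly (\<lambda>p. \<Prod>a\<in>A. F a p)"
  by (induction A rule: finite_induct) (auto intro: lpoly_mult lpoly_const)

lemma lpoly_meas: "lpoly (\<lambda>p. meas p $k$l)"
  unfolding meas_def power2_eq_square
  by (simp, intro lpoly_sum lpoly_mult lpoly_diff lpoly_coord, auto)

definition mnr :: "'n \<Rightarrow> ('d \<Rightarrow> 'n) \<Rightarrow> complex^'d^'n \<Rightarrow> complex" where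
  "mnr b a p = det (\<chi> m l. p$(a m)$l - p$b$l)"

lemma lpoly_mnr: fixes a :: "'d::finite \<Rightarrow> 'n::finite" shows "lpoly (mnr b a)"
proof -
  have "mnr b a = (\<lambda>p. \<Sum>\<pi> | \<pi> permutes (UNIV::'d set). of_int (sign \<pi>) * (\<Prod>i\<in>UNIV. p$(a i)$(\<pi> i) - p$b$(\<pi> i)))"
    by (rule ext) (simp add: mnr_def det_def)
  moreover have "lpoly (\<lambda>p. \<Sum>\<pi> | \<pi> permutes (UNIV::'d set). of_int (sign \<pi>) * (\<Prod>i\<in>UNIV. p$(a i)$(\<pi> i) - p$b$(\<pi> i)))"
    by (intro lpoly_sum lpoly_mult lpoly_const lpoly_prod lpoly_diff lpoly_coord) auto
  ultimately show ?thesis by simp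
qed

definition allm :: "complex^'d^'n \<Rightarrow> complex" where
  "allm p = (\<Prod>k\<in>UNIV. \<Prod>l\<in>UNIV - {k}. meas p $k$l)"

lemma lpoly_allm: "lpoly allm"
  unfolding allm_def by (intro lpoly_prod lpoly_meas) auto

lemma allm_nz: "allm p \<noteq> 0 \<longleftrightarrow> (\<forall>k l. k \<noteq> l \<longrightarrow> meas p $k$l \<noteq> 0)"
  unfolding allm_def by auto

lemma lpoly_get:
  assumes "lpoly F" "F (lin p v t0) \<noteq> 0"
  obtains c where "\<And>t. F (lin p v t) = poly c t" "c \<noteq> 0"
  using assms unfolding lpoly_def by (metis poly_0)

lemma cont_lin: "continuous_on S (lin p v)"
  unfolding lin_def by (intro continuous_intros)

lemma lpoly_path:
  assumes F: "lpoly F" and p: "F p \<noteq> 0" and q: "F q \<noteq> 0"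
  shows "\<exists>g. path g \<and> pathstart g = p \<and> pathfinish g = q \<and> (\<forall>t\<in>{0..1}. F (g t) \<noteq> 0)"
proof -
  obtain c where c: "\<And>t. F (lin p (q - p) t) = poly c t" "c \<noteq> 0"
    using lpoly_get[OF F, of p "q - p" 0] p by auto
  define R where "R = {t. poly c t = 0}"
  have "finite R" unfolding R_def using poly_roots_finite[OF c(2)] .
  then have "path_connected (- R)"
    by (intro path_connected_complement_countable) (auto simp: uncountable_infinite dest: countable_finite)
  moreover have "0 \<in> - R" "1 \<in> - R" using p q c(1)[of 0] c(1)[of 1] by (auto simp: R_def)
  ultimately obtain h where h: "path h" "path_image h \<subseteq> - R" "pathstart h = 0" "pathfinish h = 1"
    unfolding path_connected_def by blast
  define g where "g = lin p (q - p) \<circ> h"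
  have "path g" unfolding g_def using h(1) by (intro path_continuous_image cont_lin)
  moreover have "F (g t) \<noteq> 0" if "t \<in> {0..1}" for t
  proof -
    have "h t \<in> path_image h" using that unfolding path_image_def by blast
    then have "h t \<notin> R" using h(2) by blast
    then show ?thesis using c(1) by (simp add: g_def R_def)
  qed
  ultimately show ?thesis using h(3,4) by (intro exI[of _ g]) (auto simp: g_def pathstart_def pathfinish_def)
qed

lemma lpoly_between:
  assumes F: "lpoly F" and G: "lpoly G" and "F (lin p v t1) \<noteq> 0" "G (lin p v t2) \<noteq> 0"
  shows "\<exists>t. F (lin p v t) \<noteq> 0 \<and> G (lin p v t) \<noteq> 0"
proof -
  obtain c where c: "\<And>t. F (lin p v t) = poly c t" "c \<noteq> 0" using lpoly_get[OF F] assms(3) by metis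
  obtain d where d: "\<And>t. G (lin p v t) = poly d t" "d \<noteq> 0" using lpoly_get[OF G] assms(4) by metis
  have "c * d \<noteq> 0" using c d by simp
  then have "finite {t. poly (c * d) t = 0}" by (rule poly_roots_finite)
  then have "{t. poly (c * d) t = 0} \<noteq> UNIV" using infinite_UNIV_char_0 by (metis infinite_UNIV_char_0)
  then obtain t where "poly (c * d) t \<noteq> 0" by blast
  then show ?thesis using c d by (auto intro: exI[of _ t])
qed

lemma lpoly_small:
  assumes F: "lpoly F" and nz: "F (lin p v t0) \<noteq> 0"
  shows "\<forall>\<^sub>F s in at_right (0::real). F (lin p v (of_real s)) \<noteq> 0"
proof -
  obtain c where c: "\<And>t. F (lin p v t) = poly c t" "c \<noteq> 0" using lpoly_get[OF F] nz by metis
  define R where "R = {t. poly c t = 0}"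
  have fin: "finite R" unfolding R_def using poly_roots_finite[OF c(2)] .
  have "\<forall>\<rho>\<in>R. \<forall>\<^sub>F s in at_right (0::real). complex_of_real s \<noteq> \<rho>"
  proof
    fix \<rho> assume "\<rho> \<in> R"
    show "\<forall>\<^sub>F s in at_right (0::real). complex_of_real s \<noteq> \<rho>"
    proof (cases "\<rho> = 0")
      case True
      then show ?thesis using eventually_at_right_less[of "0::real"] by (auto elim!: eventually_mono)
    next
      case False
      have "((\<lambda>s. norm (complex_of_real s)) \<longlongrightarrow> norm (complex_of_real 0)) (at_right (0::real))"
        by (intro tendsto_intros)
      then have "\<forall>\<^sub>F s in at_right (0::real). norm (complex_of_real s) < norm \<rho>"
        using False by (intro order_tendstoD) auto
      then show ?thesis by (auto elim!: eventually_mono)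
    qed
  qed
  then have "\<forall>\<^sub>F s in at_right (0::real). \<forall>\<rho>\<in>R. complex_of_real s \<noteq> \<rho>"
    by (rule eventually_ball_finite[OF fin])
  then show ?thesis by (auto elim!: eventually_mono simp: c R_def)
qed



definition Nf :: "'n \<Rightarrow> ('d \<Rightarrow> 'n) \<Rightarrow> complex^'d^'n" where
  "Nf b a = (\<chi> k l. if k \<in> range a \<and> inv a k = l then 1 else 0)"

definition Bm :: "'n \<Rightarrow> ('d \<Rightarrow> 'n) \<Rightarrow> complex^'d^'n \<Rightarrow> complex^'n^'n" where
  "Bm b a p = (\<chi> k l. (if l \<in> range a then p$k$(inv a l) else 0)
      + (if l = b then 1 - (\<Sum>m\<in>UNIV. p$k$m) - (if k \<notin> range a \<and> k \<noteq> b then 1 else 0) else 0)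
      + (if k \<notin> range a \<and> k \<noteq> b \<and> l = k then 1 else 0))"

lemma sum_if_eq: fixes b :: "'n::finite" shows "(\<Sum>l\<in>UNIV. if l = b then (X::complex) else 0) = X"
  by simp

lemma sum_range_inv:
  fixes a :: "'d::finite \<Rightarrow> 'n::finite"
  assumes "inj a"
  shows "(\<Sum>l\<in>UNIV. if l \<in> range a then f (inv a l) else 0) = (\<Sum>m\<in>UNIV. (f m :: complex))"
proof -
  have "(\<Sum>l\<in>UNIV. if l \<in> range a then f (inv a l) else 0) = (\<Sum>l\<in>range a. f (inv a l))"
    by (simp add: sum.inter_filter[symmetric])
  also have "\<dots> = (\<Sum>m\<in>UNIV. f (inv a (a m)))" by (simp add: sum.reindex[OF assms])
  also have "\<dots> = (\<Sum>m\<in>UNIV. f m)" using assms by simp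
  finally show ?thesis .
qed

lemma sum_range_inv2:
  fixes a :: "'d::finite \<Rightarrow> 'n::finite"
  assumes "inj a"
  shows "(\<Sum>l\<in>UNIV. (if l \<in> range a then f (inv a l) else 0) * g l) = (\<Sum>m\<in>UNIV. (f m :: complex) * g (a m))"
proof -
  have "(\<Sum>l\<in>UNIV. (if l \<in> range a then f (inv a l) else 0) * g l)
     = (\<Sum>l\<in>UNIV. if l \<in> range a then f (inv a l) * g (a (inv a l)) else 0)"
    by (rule sum.cong) (auto simp: f_inv_into_f)
  also have "\<dots> = (\<Sum>m\<in>UNIV. f m * g (a m))" by (rule sum_range_inv[OF assms])
  finally show ?thesis .
qed

lemma sum_if_eq2: fixes b :: "'n::finite" shows "(\<Sum>l\<in>UNIV. (if l = b then (X::complex) else 0) * g l) = X * g b"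
proof -
  have "(\<Sum>l\<in>UNIV. (if l = b then (X::complex) else 0) * g l) = (\<Sum>l\<in>UNIV. if l = b then X * g b else 0)"
    by (rule sum.cong) auto
  then show ?thesis by simp
qed

lemma sum_if_eq3: fixes k :: "'n::finite" shows "(\<Sum>l\<in>UNIV. (if C1 \<and> C2 \<and> l = k then 1 else 0) * g l) = (if C1 \<and> C2 then g k else (0::complex))"
proof -
  have "(\<Sum>l\<in>UNIV. (if C1 \<and> C2 \<and> l = k then 1 else 0) * g l) = (\<Sum>l\<in>UNIV. if l = k then (if C1 \<and> C2 then g k else 0) else 0)"
    by (rule sum.cong) auto
  then show ?thesis by simp
qed

lemma mnr_nz_props:
  fixes a :: "'d::finite \<Rightarrow> 'n::finite"
  assumes "mnr b a p \<noteq> 0"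
  shows "inj a" "b \<notin> range a"
proof -
  show "inj a"
  proof (rule injI, rule ccontr)
    fix m1 m2 assume "a m1 = a m2" "m1 \<noteq> m2"
    then have "det (\<chi> m l. p$(a m)$l - p$b$l) = 0"
      by (intro det_identical_rows[of m1 m2]) (auto simp: row_def vec_eq_iff)
    then show False using assms by (simp add: mnr_def)
  qed
  show "b \<notin> range a"
  proof
    assume "b \<in> range a"
    then obtain m where "b = a m" by blast
    then have "det (\<chi> m l. p$(a m)$l - p$b$l) = 0"
      by (intro det_zero_row(1)[of m]) (auto simp: row_def vec_eq_iff)
    then show False using assms by (simp add: mnr_def)
  qed
qed

lemma mnr_Nf:
  fixes a :: "'d::finite \<Rightarrow> 'n::finite"
  assumes "inj a" "b \<notin> range a"
  shows "mnr b a (Nf b a) = 1"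
proof -
  have "(\<chi> m l. Nf b a $(a m)$l - Nf b a $b$l) = (mat 1 :: complex^'d^'d)"
    using assms by (auto simp: Nf_def mat_def vec_eq_iff)
  then show ?thesis by (simp add: mnr_def det_I)
qed

lemma Bm_Nf:
  fixes a :: "'d::finite \<Rightarrow> 'n::finite"
  assumes a: "inj a" and b: "b \<notin> range a"
  shows "Bm b a p ** Nf b a = p"
proof -
  have "(\<Sum>l\<in>UNIV. Bm b a p $k$l * Nf b a $l$m) = p$k$m" for k m
  proof -
    have "(\<Sum>l\<in>UNIV. Bm b a p $k$l * Nf b a $l$m) = (\<Sum>l\<in>UNIV. if l = a m then Bm b a p $k$l else 0)"
      using a by (intro sum.cong) (auto simp: Nf_def)
    also have "\<dots> = Bm b a p $k$(a m)" by simp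
    also have "\<dots> = p$k$m" using a b by (auto simp: Bm_def)
    finally show ?thesis .
  qed
  then show ?thesis by (simp add: matrix_matrix_mult_def vec_eq_iff)
qed

lemma Bm_affm:
  fixes a :: "'d::finite \<Rightarrow> 'n::finite"
  assumes a: "inj a" and b: "b \<notin> range a"
  shows "affm (Bm b a p)"
  unfolding affm_def
proof
  fix k
  have "(\<Sum>l\<in>UNIV. Bm b a p $k$l) = (\<Sum>l\<in>UNIV. if l \<in> range a then p$k$(inv a l) else 0)
      + (\<Sum>l\<in>UNIV. if l = b then 1 - (\<Sum>m\<in>UNIV. p$k$m) - (if k \<notin> range a \<and> k \<noteq> b then 1 else 0) else 0)
      + (\<Sum>l\<in>UNIV. if k \<notin> range a \<and> k \<noteq> b \<and> l = k then 1 else 0)"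
    by (simp add: Bm_def sum.distrib)
  also have "\<dots> = 1"
  proof -
    have e1: "(\<Sum>l\<in>UNIV. if l \<in> range a then p$k$(inv a l) else 0) = (\<Sum>m\<in>UNIV. p$k$m)"
      by (rule sum_range_inv[OF a])
    have e2: "(\<Sum>l\<in>UNIV. if l = b then 1 - (\<Sum>m\<in>UNIV. p$k$m) - (if k \<notin> range a \<and> k \<noteq> b then 1 else 0) else 0)
       = 1 - (\<Sum>m\<in>UNIV. p$k$m) - (if k \<notin> range a \<and> k \<noteq> b then 1 else 0)"
      by (rule sum_if_eq)
    have e3: "(\<Sum>l\<in>UNIV. if k \<notin> range a \<and> k \<noteq> b \<and> l = k then 1 else 0) = (if k \<notin> range a \<and> k \<noteq> b then 1 else (0::complex))"
    proof (cases "k \<notin> range a \<and> k \<noteq> b")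
      case True then show ?thesis using sum_if_eq[of k "1::complex"] by simp
    next
      case False
      then have "\<And>l. (if k \<notin> range a \<and> k \<noteq> b \<and> l = k then 1 else 0) = (0::complex)" by auto
      then show ?thesis using False by simp
    qed
    show ?thesis unfolding e1 e2 e3 by simp
  qed
  finally show "(\<Sum>l\<in>UNIV. Bm b a p $k$l) = 1" .
qed

lemma det_nz_ker:
  fixes Q :: "complex^'d^'d"
  assumes "det Q \<noteq> 0" "Q *v w = 0"
  shows "w = 0"
proof -
  obtain Q' where "Q' ** Q = mat 1" using assms(1) invertible_det_nz invertible_left_inverse by blast
  then have "w = Q' *v (Q *v w)" by (simp add: matrix_vector_mul_assoc)
  then show ?thesis using assms(2) by simp
qed

lemma Bm_inj:
  fixes a :: "'d::finite \<Rightarrow> 'n::finite"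
  assumes nz: "mnr b a p \<noteq> 0"
  shows "\<exists>C. C ** Bm b a p = mat 1"
proof -
  have a: "inj a" and b: "b \<notin> range a" using mnr_nz_props[OF nz] by auto
  have row: "(Bm b a p *v v)$k = (\<Sum>m\<in>UNIV. p$k$m * v$(a m))
     + (1 - (\<Sum>m\<in>UNIV. p$k$m) - (if k \<notin> range a \<and> k \<noteq> b then 1 else 0)) * v$b
     + (if k \<notin> range a \<and> k \<noteq> b then v$k else 0)" for v k
  proof -
    have "(Bm b a p *v v)$k = (\<Sum>l\<in>UNIV. (if l \<in> range a then p$k$(inv a l) else 0) * v$l)
      + (\<Sum>l\<in>UNIV. (if l = b then 1 - (\<Sum>m\<in>UNIV. p$k$m) - (if k \<notin> range a \<and> k \<noteq> b then 1 else 0) else 0) * v$l)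
      + (\<Sum>l\<in>UNIV. (if k \<notin> range a \<and> k \<noteq> b \<and> l = k then 1 else 0) * v$l)"
      by (simp only: matrix_vector_mult_def Bm_def vec_lambda_beta distrib_right sum.distrib)
    also have "\<dots> = (\<Sum>m\<in>UNIV. p$k$m * v$(a m))
     + (1 - (\<Sum>m\<in>UNIV. p$k$m) - (if k \<notin> range a \<and> k \<noteq> b then 1 else 0)) * v$b
     + (if k \<notin> range a \<and> k \<noteq> b then v$k else 0)"
      unfolding sum_range_inv2[OF a] sum_if_eq2 sum_if_eq3 ..
    finally show ?thesis .
  qed
  have "\<forall>v. Bm b a p *v v = 0 \<longrightarrow> v = 0"
  proof (intro allI impI)
    fix v assume v0: "Bm b a p *v v = 0"
    have eq: "\<And>k. (Bm b a p *v v)$k = 0" using v0 by simp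
    have rb: "(\<Sum>m\<in>UNIV. p$b$m * v$(a m)) + (1 - (\<Sum>m\<in>UNIV. p$b$m)) * v$b = 0"
      using eq[of b] row[of v b] by simp
    have ra: "(\<Sum>m\<in>UNIV. p$(a m0)$m * v$(a m)) + (1 - (\<Sum>m\<in>UNIV. p$(a m0)$m)) * v$b = 0" for m0
      using eq[of "a m0"] row[of v "a m0"] by simp
    define Q where "Q = (\<chi> m l. p$(a m)$l - p$b$l)"
    define w where "w = (\<chi> m. v$(a m) - v$b)"
    have "(Q *v w)$m0 = 0" for m0
    proof -
      have "(Q *v w)$m0 = (\<Sum>m\<in>UNIV. (p$(a m0)$m - p$b$m) * (v$(a m) - v$b))"
        by (simp add: Q_def w_def matrix_vector_mult_def)
      also have "\<dots> = ((\<Sum>m\<in>UNIV. p$(a m0)$m * v$(a m)) + (1 - (\<Sum>m\<in>UNIV. p$(a m0)$m)) * v$b)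
          - ((\<Sum>m\<in>UNIV. p$b$m * v$(a m)) + (1 - (\<Sum>m\<in>UNIV. p$b$m)) * v$b)"
        by (simp add: algebra_simps sum_subtractf sum.distrib sum_distrib_left)
      also have "\<dots> = 0" using ra rb by simp
      finally show ?thesis .
    qed
    then have "Q *v w = 0" by (simp add: vec_eq_iff)
    moreover have "det Q \<noteq> 0" using nz by (simp add: mnr_def Q_def)
    ultimately have "w = 0" using det_nz_ker by blast
    then have va: "\<And>m. v$(a m) = v$b" by (simp add: w_def vec_eq_iff)
    have "v$b = 0"
    proof -
      have "(\<Sum>m\<in>UNIV. p$b$m * v$(a m)) = (\<Sum>m\<in>UNIV. p$b$m) * v$b"
        by (simp add: va sum_distrib_right)
      then show ?thesis using rb by (simp add: algebra_simps)
    qed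
    then have va0: "\<And>m. v$(a m) = 0" using va by simp
    show "v = 0"
    proof (rule vec_eq_iff[THEN iffD2], rule allI)
      fix k
      show "v$k = 0$k"
      proof (cases "k \<in> range a \<or> k = b")
        case True then show ?thesis using va0 \<open>v$b = 0\<close> by auto
      next
        case False
        then show ?thesis using eq[of k] row[of v k] va0 \<open>v$b = 0\<close> by simp
      qed
    qed
  qed
  then show ?thesis using matrix_left_invertible_ker by blast
qed



abbreviation TT :: "('d::finite) itself \<Rightarrow> complex^'n^'n \<Rightarrow> (complex^'n^'n) set" where
  "TT D z \<equiv> zariski_tangent (M_set D) z"

lemma fd_lin:
  assumes "bounded_linear L"
  shows "frechet_derivative L (at z) = L"
  using frechet_derivative_at[OF bounded_linear_imp_has_derivative[OF assms]] by simp

lemma bl_coord: "bounded_linear (\<lambda>x::complex^'n^'n. x$i$j)"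
  by (intro bounded_linear_compose[OF bounded_linear_vec_nth bounded_linear_vec_nth])

lemma zt_edge: fixes z :: "complex^'n^'n" shows "TT TYPE('d::finite) z \<subseteq> edge_space"
proof
  fix v assume v: "v \<in> TT TYPE('d) z"
  have diag: "v$i$i = 0" for i
  proof -
    have "(\<lambda>x::complex^'n^'n. x$i$i) \<in> vanishing_ideal (M_set TYPE('d))"
      by (auto simp: vanishing_ideal_def M_set_def meas_def intro: pf_coord)
    then have "fd (\<lambda>x::complex^'n^'n. x$i$i) z v = 0" using v by (auto simp: zariski_tangent_def)
    then show ?thesis by (simp add: fd_lin[OF bl_coord])
  qed
  have sym: "v$i$j = v$j$i" for i j
  proof -
    have "(\<lambda>x::complex^'n^'n. x$i$j - x$j$i) \<in> vanishing_ideal (M_set TYPE('d))"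
      by (auto simp: vanishing_ideal_def M_set_def meas_def power2_commute intro: pf_diff pf_coord)
    then have "fd (\<lambda>x::complex^'n^'n. x$i$j - x$j$i) z v = 0" using v by (auto simp: zariski_tangent_def)
    moreover have "bounded_linear (\<lambda>x::complex^'n^'n. x$i$j - x$j$i)"
      by (intro bounded_linear_sub bl_coord)
    ultimately show ?thesis by (simp add: fd_lin)
  qed
  show "v \<in> edge_space" using diag sym by (simp add: edge_space_def)
qed

lemma dim_transfer:
  assumes B: "affm B" and CB: "C ** B = mat 1"
  shows "dim (TT TYPE('d::finite) z) \<le> dim (TT TYPE('d) (phiB b B z))"
proof (rule zt_linear_map[OF linear_phiB pf_phiB phiB_M[OF B]])
  show "inj_on (phiB b B) (TT TYPE('d) z)"
  proof (rule inj_onI)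
    fix x y assume "x \<in> TT TYPE('d) z" "y \<in> TT TYPE('d) z" "phiB b B x = phiB b B y"
    then show "x = y" using phiB_inv[OF B CB] zt_edge by (metis subsetD)
  qed
qed

lemma dim_Nf_eq:
  fixes a :: "'d::finite \<Rightarrow> 'n::finite"
  assumes nz: "mnr b a p \<noteq> 0"
  shows "dim (TT TYPE('d) (meas p)) = dim (TT TYPE('d) (meas (Nf b a)))"
proof -
  have a: "inj a" and b: "b \<notin> range a" using mnr_nz_props[OF nz] by auto
  define B where "B = Bm b a p"
  have aB: "affm B" unfolding B_def using Bm_affm[OF a b] .
  have BN: "B ** Nf b a = p" unfolding B_def using Bm_Nf[OF a b] .
  obtain C where CB: "C ** B = mat 1" using Bm_inj[OF nz] unfolding B_def by blast
  have BC: "B ** C = mat 1" using CB matrix_left_right_inverse by blast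
  have aC: "affm C" using affm_inv[OF aB CB] .
  have CP: "C ** p = Nf b a" using BN CB by (metis matrix_mul_assoc matrix_mul_lid)
  have "dim (TT TYPE('d) (meas (Nf b a))) \<le> dim (TT TYPE('d) (phiB b B (meas (Nf b a))))"
    by (rule dim_transfer[OF aB CB])
  also have "phiB b B (meas (Nf b a)) = meas p" by (simp only: phiB_meas[OF aB] BN)
  finally have 1: "dim (TT TYPE('d) (meas (Nf b a))) \<le> dim (TT TYPE('d) (meas p))" .
  have "dim (TT TYPE('d) (meas p)) \<le> dim (TT TYPE('d) (phiB b C (meas p)))"
    by (rule dim_transfer[OF aC BC])
  also have "phiB b C (meas p) = meas (Nf b a)" by (simp only: phiB_meas[OF aC] CP)
  finally show ?thesis using 1 by simp
qed

lemma dim_all_eq: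
  fixes a :: "'d::finite \<Rightarrow> 'n::finite" and a' :: "'d \<Rightarrow> 'n"
  assumes nz: "mnr b a p \<noteq> 0" and nz': "mnr b' a' p' \<noteq> 0"
  shows "dim (TT TYPE('d) (meas p)) = dim (TT TYPE('d) (meas p'))"
proof -
  obtain t where t: "mnr b a (lin p (p' - p) t) \<noteq> 0" "mnr b' a' (lin p (p' - p) t) \<noteq> 0"
    using lpoly_between[OF lpoly_mnr lpoly_mnr, of b a p "p' - p" 0 b' a' 1] nz nz' by auto
  show ?thesis using dim_Nf_eq[OF nz] dim_Nf_eq[OF nz'] dim_Nf_eq[OF t(1)] dim_Nf_eq[OF t(2)] by simp
qed

lemma exists_frame:
  assumes "CARD('n::finite) \<ge> CARD('d::finite) + 1"
  shows "\<exists>(b::'n) (a::'d \<Rightarrow> 'n). inj a \<and> b \<notin> range a"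
proof -
  obtain b :: 'n where True by blast
  have "card (UNIV::'d set) \<le> card (UNIV - {b})" using assms by (simp add: card_Diff_singleton)
  then obtain a :: "'d \<Rightarrow> 'n" where "a ` UNIV \<subseteq> UNIV - {b}" "inj_on a UNIV"
    using card_le_inj[of "UNIV::'d set" "UNIV - {b}"] by auto
  then show ?thesis by blast
qed

lemma cont_meas_lin: "continuous_on S (\<lambda>s::real. meas (lin r v (of_real s)))"
  unfolding meas_def lin_def by (intro continuous_intros)

lemma nonsing:
  fixes a :: "'d::finite \<Rightarrow> 'n::finite"
  assumes card: "CARD('n) \<ge> CARD('d) + 1" and nz: "mnr b a p \<noteq> 0"
  shows "meas p \<notin> sing_locus (M_set TYPE('d))"
proof -
  obtain b0 :: 'n and a0 :: "'d \<Rightarrow> 'n" where f0: "inj a0" "b0 \<notin> range a0"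
    using exists_frame[OF card] by blast
  define N0 where "N0 = Nf b0 a0"
  have mN0: "mnr b0 a0 N0 = 1" unfolding N0_def using mnr_Nf[OF f0] .
  define t0 where "t0 = dim (TT TYPE('d) (meas p))"
  have low: "t0 \<le> dim (TT TYPE('d) z)" if z: "z \<in> M_set TYPE('d)" for z :: "complex^'n^'n"
  proof -
    obtain r :: "complex^'d^'n" where zr: "z = meas r" using z by (auto simp: M_set_def)
    obtain e where e: "e > 0" "\<And>y. dist y z < e \<Longrightarrow> dim (TT TYPE('d) y) \<le> dim (TT TYPE('d) z)"
      using zt_semicont[of z "M_set TYPE('d)"] by blast
    define v where "v = N0 - r"
    have ev1: "\<forall>\<^sub>F s in at_right (0::real). mnr b0 a0 (lin r v (of_real s)) \<noteq> 0"
      using lpoly_small[OF lpoly_mnr, of b0 a0 r v 1] mN0 by (simp add: v_def)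
    have "isCont (\<lambda>s::real. meas (lin r v (of_real s))) 0"
      using cont_meas_lin continuous_on_eq_continuous_at open_UNIV by blast
    then have "((\<lambda>s::real. meas (lin r v (of_real s))) \<longlongrightarrow> z) (at 0)"
      using zr by (simp add: isCont_def)
    then have "((\<lambda>s::real. meas (lin r v (of_real s))) \<longlongrightarrow> z) (at_right 0)"
      using tendsto_mono[OF at_le[OF subset_UNIV]] by blast
    then have ev2: "\<forall>\<^sub>F s in at_right (0::real). dist (meas (lin r v (of_real s))) z < e"
      using tendstoD e(1) by blast
    obtain s where s: "mnr b0 a0 (lin r v (of_real s)) \<noteq> 0" "dist (meas (lin r v (of_real s))) z < e"
      using eventually_happens'[OF trivial_limit_at_right_real eventually_conj[OF ev1 ev2]] by blast
    have "t0 = dim (TT TYPE('d) (meas (lin r v (of_real s))))"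
      unfolding t0_def by (rule dim_all_eq[OF nz s(1)])
    also have "\<dots> \<le> dim (TT TYPE('d) z)" using e(2) s(2) by blast
    finally show ?thesis .
  qed
  have "var_dim (M_set TYPE('d) :: (complex^'n^'n) set) = t0"
    unfolding var_dim_def
  proof (rule Least_equality)
    have "meas p \<in> M_set TYPE('d)" by (simp add: M_set_def)
    then show "\<exists>y\<in>(M_set TYPE('d) :: (complex^'n^'n) set). dim (TT TYPE('d) y) = t0" unfolding t0_def by blast
    show "\<And>k. \<exists>y\<in>(M_set TYPE('d) :: (complex^'n^'n) set). dim (TT TYPE('d) y) = k \<Longrightarrow> t0 \<le> k" using low by blast
  qed
  then show ?thesis by (simp add: sing_locus_def t0_def)
qed



definition Sgood :: "complex^'d^'n \<Rightarrow> bool" where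
  "Sgood p \<longleftrightarrow> (\<exists>b a. mnr b a p \<noteq> 0) \<and> allm p \<noteq> 0"

lemma good_pt:
  assumes card: "CARD('n::finite) \<ge> CARD('d::finite) + 1"
    and S: "Sgood (p :: complex^'d^'n)" and x: "x \<in> edge_space" and sq: "sq_map x = meas p"
  shows "x \<in> good_L TYPE('d)"
proof -
  obtain b a where nz: "mnr b a p \<noteq> 0" using S by (auto simp: Sgood_def)
  have ns: "meas p \<notin> sing_locus (M_set TYPE('d))" using nonsing[OF card nz] .
  have nZ: "meas p \<notin> Z_set" using S by (auto simp: Sgood_def allm_nz Z_set_def)
  have "meas p \<in> M_set TYPE('d)" by (simp add: M_set_def)
  then show ?thesis using x sq ns nZ by (auto simp: good_L_def L_set_def bad_L_def bad_M_def)
qed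

lemma meas_sym: "meas p $k$l = meas p $l$k"
  unfolding meas_def by (simp add: power2_commute)

lemma sqrt_unique:
  fixes g h :: "real \<Rightarrow> complex"
  assumes cg: "continuous_on {0..1} g" and ch: "continuous_on {0..1} h"
    and sq: "\<And>t. t \<in> {0..1} \<Longrightarrow> (g t)^2 = (h t)^2" and nz: "\<And>t. t \<in> {0..1} \<Longrightarrow> g t \<noteq> 0"
    and st: "g 0 = h 0"
  shows "\<And>t. t \<in> {0..1} \<Longrightarrow> g t = h t"
proof -
  define q where "q t = h t / g t" for t
  have cq: "continuous_on {0..1} q" unfolding q_def using cg ch nz by (intro continuous_intros) auto
  have qv: "q t \<in> {1, -1}" if "t \<in> {0..1}" for t
  proof -
    have "(q t)^2 = (h t)^2 / (g t)^2" by (simp add: q_def power_divide)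
    also have "\<dots> = 1" using sq[OF that, symmetric] nz[OF that] by simp
    finally have "(q t)^2 = 1" .
    then show ?thesis using power2_eq_1_iff by auto
  qed
  have "q ` {0..1} \<subseteq> {1, -1}" using qv by blast
  then have "finite (q ` {0..1})" by (rule finite_subset) simp
  then have "q constant_on {0..1}" using continuous_finite_range_constant[OF connected_Icc cq] by blast
  then obtain c where c: "\<And>t::real. t \<in> {0..1} \<Longrightarrow> q t = c" by (auto simp: constant_on_def)
  have "q 0 = 1" using st nz[of 0] by (simp add: q_def)
  then have "c = 1" using c[of 0] by simp
  fix t :: real assume t: "t \<in> {0..1}"
  then have "q t = 1" using c \<open>c = 1\<close> by simp
  then show "g t = h t" using nz[OF t] by (simp add: q_def)
qed

lemma cont_meas: "continuous_on S \<gamma> \<Longrightarrow> continuous_on S (\<lambda>t. meas (\<gamma> t :: complex^'d^'n))"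
  unfolding meas_def by (intro continuous_intros)

lemma lift:
  fixes \<gamma> :: "real \<Rightarrow> complex^'d^'n"
  assumes pg: "path \<gamma>" and nz: "\<And>t. t \<in> {0..1} \<Longrightarrow> allm (\<gamma> t) \<noteq> 0"
    and x: "x \<in> edge_space" and sq: "sq_map x = meas (\<gamma> 0)"
  shows "\<exists>\<xi>. path \<xi> \<and> \<xi> 0 = x \<and> (\<forall>t\<in>{0..1}. \<xi> t \<in> edge_space \<and> sq_map (\<xi> t) = meas (\<gamma> t))"
proof -
  have cm: "continuous_on {0..1} (\<lambda>t. meas (\<gamma> t) $k$l)" for k l
    using cont_meas[of "{0..1}" \<gamma>] pg unfolding path_def by (intro continuous_intros) auto
  have mnz: "meas (\<gamma> t) $k$l \<noteq> 0" if "t \<in> {0..1}" "k \<noteq> l" for t k l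
    using nz[OF that(1)] that(2) by (auto simp: allm_nz)
  have "\<forall>k l. \<exists>g. continuous_on {0..1} g \<and> (\<forall>t\<in>{0..1}. meas (\<gamma> t) $k$l = (g t)^2)"
  proof (intro allI)
    fix k l
    show "\<exists>g. continuous_on {0..1} g \<and> (\<forall>t\<in>{0..1}. meas (\<gamma> t) $k$l = (g t)^2)"
    proof (cases "k = l")
      case True
      then show ?thesis by (intro exI[of _ "\<lambda>t. 0"]) (auto simp: meas_def)
    next
      case False
      obtain g where "continuous_on {0..1} g" "\<And>t. t \<in> {0..1} \<Longrightarrow> meas (\<gamma> t) $k$l = (g t)^2"
        using continuous_sqrt_on_contractible[OF cm[of k l] convex_imp_contractible[OF convex_real_interval(5)]]
          mnz False by metis
      then show ?thesis by blast
    qed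
  qed
  then obtain G where G: "\<And>k l. continuous_on {0..1} (G k l)" "\<And>k l t. t \<in> {0..1} \<Longrightarrow> meas (\<gamma> t) $k$l = (G k l t)^2"
    by metis
  define h where "h k l t = x$k$l / G k l 0 * G k l t" for k l t
  define \<xi> where "\<xi> t = (\<chi> k l. if k = l then 0 else h k l t)" for t
  have G0: "G k l 0 \<noteq> 0" if "k \<noteq> l" for k l
    using mnz[of 0 k l] G(2)[of 0 k l] that by auto
  have Gt: "G k l t \<noteq> 0" if "k \<noteq> l" "t \<in> {0..1}" for k l t
    using mnz[of t k l] G(2)[of t k l] that by auto
  have xsq: "(x$k$l)^2 = meas (\<gamma> 0) $k$l" for k l using arg_cong[OF sq, of "\<lambda>y. y$k$l"] by (simp add: sq_map_def)
  have hsq: "(h k l t)^2 = meas (\<gamma> t) $k$l" if "k \<noteq> l" "t \<in> {0..1}" for k l t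
  proof -
    have "(h k l t)^2 = (x$k$l)^2 / (G k l 0)^2 * (G k l t)^2" by (simp add: h_def power_mult_distrib power_divide)
    also have "\<dots> = meas (\<gamma> 0) $k$l / meas (\<gamma> 0) $k$l * meas (\<gamma> t) $k$l"
    proof -
      have g0: "(G k l 0)^2 = meas (\<gamma> 0) $k$l" using G(2)[of 0 k l] by simp
      have gt: "(G k l t)^2 = meas (\<gamma> t) $k$l" using G(2)[of t k l] that by simp
      show ?thesis by (simp only: xsq g0 gt)
    qed
    also have "\<dots> = meas (\<gamma> t) $k$l" using mnz[of 0 k l] that by simp
    finally show ?thesis .
  qed
  have ch: "continuous_on {0..1} (h k l)" for k l unfolding h_def using G(1) by (intro continuous_intros)
  have hsym: "h k l t = h l k t" if "k \<noteq> l" "t \<in> {0..1}" for k l t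
  proof (rule sqrt_unique[OF ch ch _ _ _ that(2)])
    show "(h k l s)^2 = (h l k s)^2" if "s \<in> {0..1}" for s
      using hsq[OF \<open>k \<noteq> l\<close> that] hsq[of l k s] \<open>k \<noteq> l\<close> that meas_sym[of "\<gamma> s" k l] by simp
    show "h k l s \<noteq> 0" if "s \<in> {0..1}" for s
    proof
      assume "h k l s = 0"
      then show False using hsq[OF \<open>k \<noteq> l\<close> that] mnz[OF that \<open>k \<noteq> l\<close>] by simp
    qed
    show "h k l 0 = h l k 0" using x G0 \<open>k \<noteq> l\<close> by (auto simp: h_def edge_space_def)
  qed
  have "path \<xi>" unfolding path_def \<xi>_def
  proof (intro continuous_on_vec_lambda)
    fix k l show "continuous_on {0..1} (\<lambda>t. if k = l then 0 else h k l t)"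
      by (cases "k = l") (simp_all add: ch)
  qed
  moreover have "\<xi> 0 = x" using x G0 by (auto simp: \<xi>_def h_def vec_eq_iff edge_space_def)
  moreover have "\<xi> t \<in> edge_space \<and> sq_map (\<xi> t) = meas (\<gamma> t)" if "t \<in> {0..1}" for t
  proof
    show "\<xi> t \<in> edge_space" using hsym[OF _ that] by (auto simp: \<xi>_def edge_space_def)
    have "(\<xi> t $k$l)^2 = meas (\<gamma> t) $k$l" for k l
    proof (cases "k = l")
      case True then show ?thesis by (simp add: \<xi>_def meas_def)
    next
      case False then show ?thesis using hsq[OF False that] by (simp add: \<xi>_def)
    qed
    then show "sq_map (\<xi> t) = meas (\<gamma> t)" by (simp add: sq_map_def vec_eq_iff)
  qed
  ultimately show ?thesis by (intro exI[of _ \<xi>]) simp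
qed



lemma lpoly_Fm: "lpoly (\<lambda>r. mnr b a r * allm r)"
  by (intro lpoly_mult lpoly_mnr lpoly_allm)

lemma S_connect:
  assumes p: "Sgood (p::complex^'d^'n)" and q: "Sgood q"
  shows "\<exists>\<gamma>. path \<gamma> \<and> pathstart \<gamma> = p \<and> pathfinish \<gamma> = q \<and> path_image \<gamma> \<subseteq> {r. Sgood r}"
proof -
  obtain b a where pa: "mnr b a p \<noteq> 0" and pm: "allm p \<noteq> 0" using p by (auto simp: Sgood_def)
  obtain b' a' where qa: "mnr b' a' q \<noteq> 0" and qm: "allm q \<noteq> 0" using q by (auto simp: Sgood_def)
  obtain t where t: "mnr b a (lin p (q - p) t) * allm (lin p (q - p) t) \<noteq> 0"
      "mnr b' a' (lin p (q - p) t) * allm (lin p (q - p) t) \<noteq> 0"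
    using lpoly_between[OF lpoly_Fm lpoly_Fm, of b a p "q - p" 0 b' a' 1] pa pm qa qm by auto
  define r where "r = lin p (q - p) t"
  obtain g1 where g1: "path g1" "pathstart g1 = p" "pathfinish g1 = r"
      "\<forall>s\<in>{0..1}. mnr b a (g1 s) * allm (g1 s) \<noteq> 0"
    using lpoly_path[OF lpoly_Fm, of b a p r] pa pm t(1) unfolding r_def by auto
  obtain g2 where g2: "path g2" "pathstart g2 = r" "pathfinish g2 = q"
      "\<forall>s\<in>{0..1}. mnr b' a' (g2 s) * allm (g2 s) \<noteq> 0"
    using lpoly_path[OF lpoly_Fm, of b' a' r q] qa qm t(2) unfolding r_def by auto
  have "path_image g1 \<subseteq> {r. Sgood r}" using g1(4) by (auto simp: path_image_def Sgood_def)
  moreover have "path_image g2 \<subseteq> {r. Sgood r}" using g2(4) by (auto simp: path_image_def Sgood_def)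
  ultimately show ?thesis using g1 g2
    by (intro exI[of _ "g1 +++ g2"]) (auto simp: path_image_join)
qed

lemma good_L_iff: "x \<in> good_L TYPE('d::finite) \<longleftrightarrow> x \<in> edge_space \<and> sq_map x \<in> M_set TYPE('d) \<and> sq_map x \<notin> bad_M TYPE('d)"
  by (auto simp: good_L_def L_set_def bad_L_def)

lemma good_L_edge: "x \<in> good_L TYPE('d::finite) \<Longrightarrow> x \<in> edge_space"
  by (simp add: good_L_iff)

lemma good_L_meas: "x \<in> good_L TYPE('d::finite) \<Longrightarrow> \<exists>p::complex^'d^'n. sq_map x = meas p \<and> allm p \<noteq> 0"
proof -
  assume x: "x \<in> good_L TYPE('d)"
  then obtain p :: "complex^'d^'n" where p: "sq_map x = meas p" by (auto simp: good_L_iff M_set_def)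
  have "sq_map x \<notin> Z_set" using x by (auto simp: good_L_iff bad_M_def)
  then have "allm p \<noteq> 0" using p by (auto simp: allm_nz Z_set_def)
  then show ?thesis using p by blast
qed

lemma lift_pc:
  fixes \<gamma> :: "real \<Rightarrow> complex^'d::finite^'n::finite"
  assumes card: "CARD('n) \<ge> CARD('d) + 1"
    and pg: "path \<gamma>" and nz: "\<And>t. t \<in> {0..1} \<Longrightarrow> allm (\<gamma> t) \<noteq> 0"
    and Sg: "\<And>t. t \<in> {0<..1} \<Longrightarrow> Sgood (\<gamma> t)"
    and x: "x \<in> good_L TYPE('d)" and sq: "sq_map x = meas (\<gamma> 0)"
  shows "\<exists>y. path_component (good_L TYPE('d)) x y \<and> y \<in> edge_space \<and> sq_map y = meas (\<gamma> 1)"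
proof -
  obtain \<xi> where \<xi>: "path \<xi>" "\<xi> 0 = x" "\<forall>t\<in>{0..1}. \<xi> t \<in> edge_space \<and> sq_map (\<xi> t) = meas (\<gamma> t)"
    using lift[OF pg nz good_L_edge[OF x] sq] by blast
  have "path_image \<xi> \<subseteq> good_L TYPE('d)"
  proof
    fix z assume "z \<in> path_image \<xi>"
    then obtain t where t: "t \<in> {0..1}" "z = \<xi> t" by (auto simp: path_image_def)
    show "z \<in> good_L TYPE('d)"
    proof (cases "t = 0")
      case True then show ?thesis using t \<xi>(2) x by simp
    next
      case False
      then have "t \<in> {0<..1}" using t by auto
      then show ?thesis using good_pt[OF card Sg] \<xi>(3) t by auto
    qed
  qed
  then have "path_component (good_L TYPE('d)) x (\<xi> 1)"
    unfolding path_component_def using \<xi> by (auto simp: pathstart_def pathfinish_def)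
  then show ?thesis using \<xi>(3) by auto
qed

lemma lift_pc_S:
  fixes \<gamma> :: "real \<Rightarrow> complex^'d::finite^'n::finite"
  assumes card: "CARD('n) \<ge> CARD('d) + 1"
    and pg: "path \<gamma>" and Sg: "path_image \<gamma> \<subseteq> {r. Sgood r}"
    and x: "x \<in> edge_space" and sq: "sq_map x = meas (\<gamma> 0)"
  shows "\<exists>y. path_component (good_L TYPE('d)) x y \<and> y \<in> edge_space \<and> sq_map y = meas (\<gamma> 1)"
proof -
  have S: "Sgood (\<gamma> t)" if "t \<in> {0..1}" for t using Sg that unfolding path_image_def by blast
  show ?thesis
  proof (rule lift_pc[OF card pg _ _ _ sq])
    show "allm (\<gamma> t) \<noteq> 0" if "t \<in> {0..1}" for t using S[OF that] by (simp add: Sgood_def)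
    show "Sgood (\<gamma> t)" if "t \<in> {0<..1}" for t using S that by auto
    show "x \<in> good_L TYPE('d)" using good_pt[OF card S[of 0] x sq] by simp
  qed
qed

lemma reach_S:
  assumes card: "CARD('n::finite) \<ge> CARD('d::finite) + 1"
    and x: "x \<in> good_L TYPE('d)"
  shows "\<exists>x' p. path_component (good_L TYPE('d)) x x' \<and> x' \<in> edge_space \<and> Sgood (p::complex^'d^'n) \<and> sq_map x' = meas p"
proof -
  obtain p :: "complex^'d^'n" where p: "sq_map x = meas p" "allm p \<noteq> 0" using good_L_meas[OF x] by blast
  obtain b0 :: 'n and a0 :: "'d \<Rightarrow> 'n" where f0: "inj a0" "b0 \<notin> range a0"
    using exists_frame[OF card] by blast
  define v where "v = Nf b0 a0 - p"
  have ev1: "\<forall>\<^sub>F s in at_right (0::real). mnr b0 a0 (lin p v (of_real s)) \<noteq> 0"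
    using lpoly_small[OF lpoly_mnr, of b0 a0 p v 1] mnr_Nf[OF f0] by (simp add: v_def)
  have ev2: "\<forall>\<^sub>F s in at_right (0::real). allm (lin p v (of_real s)) \<noteq> 0"
    using lpoly_small[OF lpoly_allm, of p v 0] p(2) by simp
  obtain e where e: "e > 0" "\<And>s. 0 < s \<Longrightarrow> s < e \<Longrightarrow> mnr b0 a0 (lin p v (of_real s)) \<noteq> 0 \<and> allm (lin p v (of_real s)) \<noteq> 0"
    using eventually_conj[OF ev1 ev2] unfolding eventually_at_right_field by auto
  define \<gamma> where "\<gamma> t = lin p v (of_real (e / 2 * t))" for t
  have pg: "path \<gamma>" unfolding path_def \<gamma>_def lin_def by (intro continuous_intros)
  have nz: "allm (\<gamma> t) \<noteq> 0" if "t \<in> {0..1}" for t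
  proof (cases "t = 0")
    case True then show ?thesis using p(2) by (simp add: \<gamma>_def)
  next
    case False then show ?thesis using e(2)[of "e/2*t"] e(1) that by (auto simp: \<gamma>_def)
  qed
  have Sg: "Sgood (\<gamma> t)" if "t \<in> {0<..1}" for t
    using e(2)[of "e/2*t"] e(1) that unfolding Sgood_def \<gamma>_def by auto
  obtain y where y: "path_component (good_L TYPE('d)) x y" "y \<in> edge_space" "sq_map y = meas (\<gamma> 1)"
    using lift_pc[OF card pg nz Sg x] p(1) by (auto simp: \<gamma>_def)
  have "Sgood (\<gamma> 1)" using Sg by simp
  then show ?thesis using y by (intro exI[of _ y] exI[of _ "\<gamma> 1"]) simp
qed

definition flip :: "'n \<Rightarrow> 'n \<Rightarrow> complex^'n^'n \<Rightarrow> complex^'n^'n" where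
  "flip i j x = (\<chi> k l. if (k = i \<and> l = j) \<or> (k = j \<and> l = i) then - x$k$l else x$k$l)"

lemma flip_edge: "x \<in> edge_space \<Longrightarrow> i \<noteq> j \<Longrightarrow> flip i j x \<in> edge_space"
  by (auto simp: flip_def edge_space_def)

lemma flip_sq: "sq_map (flip i j x) = sq_map x"
  by (simp add: flip_def sq_map_def vec_eq_iff)

lemma flip_good: "x \<in> good_L TYPE('d::finite) \<Longrightarrow> i \<noteq> j \<Longrightarrow> flip i j x \<in> good_L TYPE('d)"
  by (simp add: good_L_iff flip_edge flip_sq)

lemma flip_cont: fixes i :: "'n::finite" shows "continuous_on S (flip i j)"
  unfolding flip_def
proof (intro continuous_on_vec_lambda)
  fix k l
  show "continuous_on S (\<lambda>x::complex^'n^'n. if (k = i \<and> l = j) \<or> (k = j \<and> l = i) then - x$k$l else x$k$l)"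
    by (cases "(k = i \<and> l = j) \<or> (k = j \<and> l = i)") (auto intro!: continuous_intros)
qed

lemma flip_pc:
  assumes "path_component (good_L TYPE('d::finite)) x y" "i \<noteq> j"
  shows "path_component (good_L TYPE('d)) (flip i j x) (flip i j y)"
proof -
  obtain g where g: "path g" "path_image g \<subseteq> good_L TYPE('d)" "pathstart g = x" "pathfinish g = y"
    using assms(1) unfolding path_component_def by blast
  have "path (flip i j \<circ> g)" using g(1) flip_cont by (intro path_continuous_image)
  moreover have "path_image (flip i j \<circ> g) \<subseteq> good_L TYPE('d)"
    using g(2) flip_good assms(2) by (auto simp: path_image_def)
  ultimately show ?thesis unfolding path_component_def using g(3,4)
    by (intro exI[of _ "flip i j \<circ> g"]) (auto simp: pathstart_def pathfinish_def)
qed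



lemma sum_delta2:
  fixes d0 d1 :: "'d::finite"
  assumes "d0 \<noteq> d1"
  shows "(\<Sum>m\<in>UNIV. (if m = d0 then A else if m = d1 then B else 0)) = (A + B :: complex)"
proof -
  have "(\<Sum>m\<in>UNIV. (if m = d0 then A else if m = d1 then B else 0))
      = (\<Sum>m\<in>UNIV. (if m = d0 then A else 0) + (if m = d1 then B else 0))"
    using assms by (intro sum.cong) auto
  then show ?thesis by (simp add: sum.distrib)
qed

lemma sum_sq_delta:
  fixes \<mu> :: "'d::finite"
  shows "(\<Sum>m\<in>UNIV. (A m - (if m = \<mu> then L else 0))^2) = (\<Sum>m\<in>UNIV. (A m)^2) + (L^2 - 2 * L * A \<mu> :: complex)"
proof -
  have "(\<Sum>m\<in>UNIV. (A m - (if m = \<mu> then L else 0))^2)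
      = (\<Sum>m\<in>UNIV. (A m)^2 + (if m = \<mu> then L^2 - 2 * L * A m else 0))"
    by (intro sum.cong) (auto simp: power2_eq_square algebra_simps)
  also have "\<dots> = (\<Sum>m\<in>UNIV. (A m)^2) + (\<Sum>m\<in>UNIV. (if m = \<mu> then L^2 - 2 * L * A m else 0))"
    by (rule sum.distrib)
  also have "\<dots> = (\<Sum>m\<in>UNIV. (A m)^2) + (L^2 - 2 * L * A \<mu>)" by simp
  finally show ?thesis .
qed

lemma loop_construct:
  fixes a :: "'d::finite \<Rightarrow> 'n::finite" and g :: "'n \<Rightarrow> nat" and d0 d1 :: 'd
  assumes a: "inj a" and ai: "i \<notin> range a" and aj: "j \<notin> range a" and ij: "i \<noteq> j"
    and d01: "d0 \<noteq> d1" and g: "inj g"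
  shows "\<exists>(c :: real \<Rightarrow> complex^'d^'n) \<rho>. path c \<and> c 0 = c 1 \<and> (\<forall>\<theta>\<in>{0..1}. Sgood (c \<theta>))
    \<and> continuous_on {0..1} \<rho> \<and> (\<forall>\<theta>\<in>{0..1}. meas (c \<theta>) $i$j = (\<rho> \<theta>)^2) \<and> \<rho> 1 = - \<rho> 0
    \<and> (\<forall>\<theta>\<in>{0..1}. \<forall>k l. k \<noteq> l \<and> \<not> ((k = i \<and> l = j) \<or> (k = j \<and> l = i)) \<longrightarrow> Re (meas (c \<theta>) $k$l) > 0)"
proof -
  define lam where "lam k = (if k \<in> range a then 1 else 2 + real (g k))" for k
  define mu where "mu k = (if k \<in> range a then inv a k else d0)" for k
  define R where "R k m = (if k = i \<or> k = j then 0 else if m = mu k then lam k else 0)" for k m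
  define E where "E \<theta> = cis (2 * pi * \<theta>)" for \<theta>
  define s where "s \<theta> = \<i> + E \<theta>" for \<theta>
  define u where "u \<theta> m = (if m = d0 then 1 else if m = d1 then s \<theta> else 0)" for \<theta> m
  define w :: complex where "w = 1/10"
  define c where "c \<theta> = (\<chi> k m. if k = i then w * u \<theta> m else complex_of_real (R k m))" for \<theta>
  define \<rho> where "\<rho> \<theta> = w * cis (pi * \<theta>) * csqrt (2 * \<i> + E \<theta>)" for \<theta>
  have lam1: "lam k \<ge> 1" for k by (simp add: lam_def)
  have normE: "norm (E \<theta>) = 1" for \<theta> by (simp add: E_def)
  have norms: "norm (s \<theta>) \<le> 2" for \<theta>
    using norm_triangle_ineq[of \<i> "E \<theta>"] normE[of \<theta>] by (simp add: s_def)
  have normu: "norm (u \<theta> m) \<le> 2" for \<theta> m using norms[of \<theta>] by (simp add: u_def)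
  have usq: "(\<Sum>m\<in>UNIV. (w * u \<theta> m)^2) = w^2 * (1 + (s \<theta>)^2)" for \<theta>
  proof -
    have "(\<Sum>m\<in>UNIV. (w * u \<theta> m)^2) = (\<Sum>m\<in>UNIV. (if m = d0 then w^2 else if m = d1 then w^2 * (s \<theta>)^2 else 0))"
      by (intro sum.cong) (auto simp: u_def power_mult_distrib)
    also have "\<dots> = w^2 + w^2 * (s \<theta>)^2" by (rule sum_delta2[OF d01])
    finally show ?thesis by (simp add: algebra_simps)
  qed
  have pc: "path c" unfolding path_def c_def u_def s_def E_def
  proof (intro continuous_on_vec_lambda)
    fix k m
    show "continuous_on {0..1} (\<lambda>\<theta>. if k = i then w * (if m = d0 then 1 else if m = d1 then \<i> + cis (2 * pi * \<theta>) else 0) else complex_of_real (R k m))"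
      by (cases "k = i"; cases "m = d0"; cases "m = d1") (auto intro!: continuous_intros)
  qed
  have E01: "E 0 = E 1" by (simp add: E_def)
  have u01: "u 0 = u 1" by (rule ext) (simp add: u_def s_def E01)
  have c01: "c 0 = c 1" unfolding c_def u01 ..
  have Ej: "c \<theta> $j$m = 0" for \<theta> m using ij by (simp add: c_def R_def)
  have mij: "meas (c \<theta>) $i$j = w^2 * (1 + (s \<theta>)^2)" for \<theta>
    using usq[of \<theta>] Ej by (simp add: meas_def c_def)
  have Eprod: "1 + (s \<theta>)^2 = E \<theta> * (2 * \<i> + E \<theta>)" for \<theta>
    by (simp add: s_def power2_eq_square algebra_simps)
  have Esq: "(cis (pi * \<theta>))^2 = E \<theta>" for \<theta>
    by (simp add: E_def power2_eq_square cis_mult mult_ac)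
  have \<rho>sq: "meas (c \<theta>) $i$j = (\<rho> \<theta>)^2" for \<theta>
    unfolding mij Eprod \<rho>_def by (simp add: power_mult_distrib Esq)
  have \<rho>1: "\<rho> 1 = - \<rho> 0" by (simp add: \<rho>_def E_def)
  have ImE: "Im (2 * \<i> + E \<theta>) \<ge> 1" for \<theta>
  proof -
    have "-1 \<le> sin (2 * pi * \<theta>)" by (rule sin_ge_minus_one)
    moreover have "Im (2 * \<i> + E \<theta>) = 2 + sin (2 * pi * \<theta>)" by (simp add: E_def)
    ultimately show ?thesis by linarith
  qed
  have c\<rho>: "continuous_on {0..1} \<rho>"
  proof -
    have "continuous_on {0..1} (\<lambda>\<theta>. csqrt (2 * \<i> + E \<theta>))"
    proof (rule continuous_on_compose2[OF continuous_on_csqrt])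
      show "continuous_on {0..1} (\<lambda>\<theta>. 2 * \<i> + E \<theta>)" unfolding E_def by (intro continuous_intros)
      show "(\<lambda>\<theta>. 2 * \<i> + E \<theta>) ` {0..1} \<subseteq> - \<real>\<^sub>\<le>\<^sub>0"
      proof
        fix z assume "z \<in> (\<lambda>\<theta>. 2 * \<i> + E \<theta>) ` {0..1}"
        then obtain \<theta> where z: "z = 2 * \<i> + E \<theta>" by blast
        have "Im z \<ge> 1" using ImE[of \<theta>] z by simp
        then show "z \<in> - \<real>\<^sub>\<le>\<^sub>0" by (auto simp: complex_nonpos_Reals_iff)
      qed
    qed
    then show ?thesis unfolding \<rho>_def by (intro continuous_intros)
  qed
  have \<rho>nz: "\<rho> \<theta> \<noteq> 0" for \<theta>
  proof -
    have "2 * \<i> + E \<theta> \<noteq> 0"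
    proof
      assume "2 * \<i> + E \<theta> = 0"
      then have "Im (2 * \<i> + E \<theta>) = 0" by simp
      then show False using ImE[of \<theta>] by linarith
    qed
    then show ?thesis by (simp add: \<rho>_def w_def)
  qed
  have Rdist: "\<exists>m. R k m \<noteq> R l m" if "k \<noteq> l" "k \<noteq> i" "l \<noteq> i" for k l
  proof -
    have Rmu: "R k (mu k) = lam k" if "k \<noteq> i" "k \<noteq> j" for k using that by (simp add: R_def)
    have one: "\<exists>m. R k m \<noteq> R l m" if "k \<noteq> l" "k \<noteq> i" "l \<noteq> i" "k \<noteq> j" for k l
    proof (cases "l = j")
      case True
      then show ?thesis using Rmu[OF that(2,4)] lam1[of k] by (intro exI[of _ "mu k"]) (simp add: R_def)
    next
      case False
      show ?thesis
      proof (cases "mu k = mu l")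
        case False
        then show ?thesis using Rmu[OF that(2,4)] lam1[of k] \<open>l \<noteq> j\<close> that
          by (intro exI[of _ "mu k"]) (auto simp: R_def)
      next
        case True
        have "lam k \<noteq> lam l"
        proof (cases "k \<in> range a"; cases "l \<in> range a")
          assume "k \<in> range a" "l \<in> range a"
          then have "inv a k \<noteq> inv a l" using that(1) by (metis f_inv_into_f)
          then show ?thesis using True \<open>k \<in> range a\<close> \<open>l \<in> range a\<close> by (simp add: mu_def)
        next
          assume "k \<notin> range a" "l \<notin> range a"
          then show ?thesis using g that(1) by (auto simp: lam_def inj_eq)
        qed (auto simp: lam_def)
        then show ?thesis using Rmu[OF that(2,4)] Rmu[OF that(3) \<open>l \<noteq> j\<close>] True by (intro exI[of _ "mu k"]) simp
      qed
    qed
    show ?thesis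
    proof (cases "k = j")
      case False then show ?thesis using one that by blast
    next
      case True
      then have "l \<noteq> j" using that by simp
      then show ?thesis using one[of l k] that by metis
    qed
  qed
  have re_other: "Re (meas (c \<theta>) $k$l) > 0" if kl: "k \<noteq> l" "k \<noteq> i" "l \<noteq> i" for \<theta> k l
  proof -
    have "meas (c \<theta>) $k$l = complex_of_real (\<Sum>m\<in>UNIV. (R k m - R l m)^2)"
      using kl by (simp add: meas_def c_def)
    moreover obtain m0 where "R k m0 \<noteq> R l m0" using Rdist[OF kl] by blast
    then have "(\<Sum>m\<in>UNIV. (R k m - R l m)^2) > 0"
      by (intro sum_pos2[of UNIV m0]) auto
    ultimately show ?thesis by simp
  qed
  have re_i: "Re (meas (c \<theta>) $i$l) > 0" if "l \<noteq> i" "l \<noteq> j" for \<theta> l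
  proof -
    have cl: "c \<theta> $l$m = (if m = mu l then complex_of_real (lam l) else 0)" for m
      using that by (simp add: c_def R_def)
    have "meas (c \<theta>) $i$l = (\<Sum>m\<in>UNIV. (w * u \<theta> m - (if m = mu l then complex_of_real (lam l) else 0))^2)"
      by (simp add: meas_def cl) (simp add: c_def)
    also have "\<dots> = w^2 * (1 + (s \<theta>)^2) + ((complex_of_real (lam l))^2 - 2 * complex_of_real (lam l) * (w * u \<theta> (mu l)))"
      by (simp only: sum_sq_delta usq)
    finally have eq: "meas (c \<theta>) $i$l = w^2 * (1 + (s \<theta>)^2) + ((complex_of_real (lam l))^2 - 2 * complex_of_real (lam l) * (w * u \<theta> (mu l)))" .
    define L where "L = lam l"
    have L1: "L \<ge> 1" using lam1 by (simp add: L_def)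
    have b1: "Re (w^2 * (1 + (s \<theta>)^2)) \<ge> - (5/100)"
    proof -
      have "norm (1 + (s \<theta>)^2) \<le> 1 + norm (s \<theta>)^2"
        using norm_triangle_ineq[of 1 "(s \<theta>)^2"] by (simp add: norm_power)
      also have "\<dots> \<le> 5" using norms[of \<theta>] power_mono[of "norm (s \<theta>)" 2 2] by simp
      finally have n5: "norm (1 + (s \<theta>)^2) \<le> 5" .
      have "norm (w^2 * (1 + (s \<theta>)^2)) = norm (1 + (s \<theta>)^2) / 100"
        by (simp add: w_def norm_mult norm_power power2_eq_square)
      then have "norm (w^2 * (1 + (s \<theta>)^2)) \<le> 5/100" using n5 by linarith
      then show ?thesis using abs_Re_le_cmod[of "w^2 * (1 + (s \<theta>)^2)"] by linarith
    qed
    have b2: "Re (2 * complex_of_real L * (w * u \<theta> (mu l))) \<le> 4/10 * L"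
    proof -
      have "norm (2 * complex_of_real L * (w * u \<theta> (mu l))) = 2 * L * (1/10) * norm (u \<theta> (mu l))"
        using L1 by (simp add: norm_mult w_def)
      also have "\<dots> \<le> 2 * L * (1/10) * 2" using normu[of \<theta> "mu l"] L1 by (intro mult_left_mono) auto
      finally show ?thesis using abs_Re_le_cmod[of "2 * complex_of_real L * (w * u \<theta> (mu l))"] by linarith
    qed
    have "Re (meas (c \<theta>) $i$l) = Re (w^2 * (1 + (s \<theta>)^2)) + L^2 - Re (2 * complex_of_real L * (w * u \<theta> (mu l)))"
      unfolding eq L_def[symmetric] by simp
    moreover have "L^2 \<ge> L" using L1 by (simp add: power2_eq_square)
    ultimately show ?thesis using b1 b2 L1 by linarith
  qed
  have re_all: "Re (meas (c \<theta>) $k$l) > 0" if "k \<noteq> l" "\<not> ((k = i \<and> l = j) \<or> (k = j \<and> l = i))" for \<theta> k l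
  proof (cases "k = i")
    case True then show ?thesis using re_i[of l \<theta>] that by auto
  next
    case False
    show ?thesis
    proof (cases "l = i")
      case True then show ?thesis using re_i[of k \<theta>] that False meas_sym[of "c \<theta>" k l] by auto
    next
      case False then show ?thesis using re_other that \<open>k \<noteq> i\<close> by blast
    qed
  qed
  have Sg: "Sgood (c \<theta>)" for \<theta>
  proof -
    have "(\<chi> m l. c \<theta> $(a m)$l - c \<theta> $j$l) = (mat 1 :: complex^'d^'d)"
    proof -
      have "a m \<noteq> i" "a m \<noteq> j" "a m \<in> range a" "inv a (a m) = m" for m using ai aj a by auto
      then show ?thesis using ij by (auto simp: c_def R_def mu_def lam_def mat_def vec_eq_iff Ej)
    qed
    then have "mnr j a (c \<theta>) \<noteq> 0" by (simp add: mnr_def det_I)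
    moreover have "allm (c \<theta>) \<noteq> 0"
    proof -
      have "meas (c \<theta>) $k$l \<noteq> 0" if "k \<noteq> l" for k l
      proof (cases "(k = i \<and> l = j) \<or> (k = j \<and> l = i)")
        case True
        then have "meas (c \<theta>) $k$l = (\<rho> \<theta>)^2" using \<rho>sq meas_sym by metis
        then show ?thesis using \<rho>nz by simp
      next
        case False
        have "Re (meas (c \<theta>) $k$l) > 0" by (rule re_all[OF that False])
        then show ?thesis by (metis zero_complex.sel(1) less_irrefl)
      qed
      then show ?thesis by (simp add: allm_nz)
    qed
    ultimately show ?thesis unfolding Sgood_def by blast
  qed
  show ?thesis
    using pc c01 Sg c\<rho> \<rho>sq \<rho>1 re_all by (intro exI[of _ c] exI[of _ \<rho>]) auto
qed



lemma loop_exists: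
  assumes d2: "CARD('d::finite) \<ge> 2" and card: "CARD('n::finite) \<ge> CARD('d) + 2" and ij: "(i::'n) \<noteq> j"
  shows "\<exists>(c :: real \<Rightarrow> complex^'d^'n) \<rho>. path c \<and> c 0 = c 1 \<and> (\<forall>\<theta>\<in>{0..1}. Sgood (c \<theta>))
    \<and> continuous_on {0..1} \<rho> \<and> (\<forall>\<theta>\<in>{0..1}. meas (c \<theta>) $i$j = (\<rho> \<theta>)^2) \<and> \<rho> 1 = - \<rho> 0
    \<and> (\<forall>\<theta>\<in>{0..1}. \<forall>k l. k \<noteq> l \<and> \<not> ((k = i \<and> l = j) \<or> (k = j \<and> l = i)) \<longrightarrow> Re (meas (c \<theta>) $k$l) > 0)"
proof -
  have "card (UNIV - {i, j}) = CARD('n) - 2" using ij by (simp add: card_Diff_subset)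
  then have "card (UNIV::'d set) \<le> card (UNIV - {i, j})" using card by simp
  then obtain a :: "'d \<Rightarrow> 'n" where a: "a ` UNIV \<subseteq> UNIV - {i, j}" "inj_on a UNIV"
    using card_le_inj[of "UNIV::'d set" "UNIV - {i, j}"] by auto
  obtain d0 :: 'd where True by blast
  have "card (UNIV - {d0}) \<ge> 1" using d2 by (simp add: card_Diff_singleton)
  then obtain d1 where d1: "d1 \<in> UNIV - {d0}" by (metis all_not_in_conv card.empty not_one_le_zero)
  obtain g :: "'n \<Rightarrow> nat" where g: "inj g"
    using finite_imp_inj_to_nat_seg[of "UNIV::'n set"] by auto
  show ?thesis
    by (rule loop_construct[of a i j d0 d1 g]) (use a d1 ij g in auto)
qed



lemma loop_flip:
  fixes c :: "real \<Rightarrow> complex^'d::finite^'n::finite"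
  assumes card: "CARD('n) \<ge> CARD('d) + 1" and ij: "i \<noteq> j"
    and pc: "path c" and c01: "c 0 = c 1" and Sc: "\<And>\<theta>. \<theta> \<in> {0..1} \<Longrightarrow> Sgood (c \<theta>)"
    and c\<rho>: "continuous_on {0..1} \<rho>" and \<rho>sq: "\<And>\<theta>. \<theta> \<in> {0..1} \<Longrightarrow> meas (c \<theta>) $i$j = (\<rho> \<theta>)^2"
    and \<rho>1: "\<rho> 1 = - \<rho> 0"
    and re: "\<And>\<theta> k l. \<theta> \<in> {0..1} \<Longrightarrow> k \<noteq> l \<Longrightarrow> \<not> ((k = i \<and> l = j) \<or> (k = j \<and> l = i)) \<Longrightarrow> Re (meas (c \<theta>) $k$l) > 0"
    and y: "y \<in> edge_space" and sq: "sq_map y = meas (c 0)"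
  shows "path_component (good_L TYPE('d)) y (flip i j y)"
proof -
  define P where "P k l \<longleftrightarrow> (k = i \<and> l = j) \<or> (k = j \<and> l = i)" for k l
  define m where "m \<theta> k l = meas (c \<theta>) $k$l" for \<theta> k l
  define h where "h k l \<theta> = (if P k l then y$k$l / \<rho> 0 * \<rho> \<theta> else y$k$l / csqrt (m 0 k l) * csqrt (m \<theta> k l))" for k l \<theta>
  define Y where "Y \<theta> = (\<chi> k l. if k = l then 0 else h k l \<theta>)" for \<theta>
  have cm: "continuous_on {0..1} (\<lambda>\<theta>. m \<theta> k l)" for k l
    using cont_meas[of "{0..1}" c] pc unfolding path_def m_def by (intro continuous_intros) auto
  have ysq: "(y$k$l)^2 = m 0 k l" for k l using arg_cong[OF sq, of "\<lambda>z. z$k$l"] by (simp add: sq_map_def m_def)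
  have msym: "m \<theta> k l = m \<theta> l k" for \<theta> k l unfolding m_def by (rule meas_sym)
  have ysym: "y$k$l = y$l$k" for k l using y by (simp add: edge_space_def)
  have Psym: "P k l = P l k" for k l unfolding P_def by auto
  have mnz: "m \<theta> k l \<noteq> 0" if "\<theta> \<in> {0..1}" "k \<noteq> l" for \<theta> k l
    using Sc[OF that(1)] that(2) by (auto simp: Sgood_def allm_nz m_def)
  have \<rho>0: "\<rho> 0 \<noteq> 0" using mnz[of 0 i j] \<rho>sq[of 0] ij by (auto simp: m_def)
  have notneg: "m \<theta> k l \<notin> \<real>\<^sub>\<le>\<^sub>0" if "\<theta> \<in> {0..1}" "k \<noteq> l" "\<not> P k l" for \<theta> k l
    using re[OF that(1,2)] that(3) by (auto simp: complex_nonpos_Reals_iff m_def P_def)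
  have ch: "continuous_on {0..1} (h k l)" if "k \<noteq> l" for k l
  proof (cases "P k l")
    case True then show ?thesis unfolding h_def using c\<rho> \<rho>0 by (auto intro!: continuous_intros)
  next
    case False
    have "continuous_on {0..1} (\<lambda>\<theta>. csqrt (m \<theta> k l))"
      by (rule continuous_on_compose2[OF continuous_on_csqrt cm]) (use notneg[OF _ that False] in auto)
    moreover have "csqrt (m 0 k l) \<noteq> 0" using mnz[of 0 k l] that by auto
    ultimately show ?thesis unfolding h_def using False by (auto intro!: continuous_intros)
  qed
  have hsq: "(h k l \<theta>)^2 = m \<theta> k l" if "\<theta> \<in> {0..1}" "k \<noteq> l" for k l \<theta>
  proof (cases "P k l")
    case True
    then have "m \<theta> k l = (\<rho> \<theta>)^2" "m 0 k l = (\<rho> 0)^2"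
      using \<rho>sq[OF that(1)] \<rho>sq[of 0] msym unfolding P_def m_def by auto
    then show ?thesis using True ysq[of k l] \<rho>0 by (simp add: h_def power_mult_distrib power_divide)
  next
    case False
    have "csqrt (m 0 k l) \<noteq> 0" using mnz[of 0 k l] that by auto
    then show ?thesis using False ysq[of k l] mnz[of 0 k l] that
      by (simp add: h_def power_mult_distrib power_divide)
  qed
  have hsym: "h k l \<theta> = h l k \<theta>" for k l \<theta>
    unfolding h_def using msym ysym Psym by simp
  have path: "path Y" unfolding path_def Y_def
  proof (intro continuous_on_vec_lambda)
    fix k l show "continuous_on {0..1} (\<lambda>\<theta>. if k = l then 0 else h k l \<theta>)"
      by (cases "k = l") (simp_all add: ch)
  qed
  have Y0: "Y 0 = y"
  proof -
    have "h k l 0 = y$k$l" if "k \<noteq> l" for k l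
    proof -
      have "csqrt (m 0 k l) \<noteq> 0" using mnz[of 0 k l] that by auto
      then show ?thesis using \<rho>0 by (simp add: h_def)
    qed
    then show ?thesis using y by (auto simp: Y_def vec_eq_iff edge_space_def)
  qed
  have Y1: "Y 1 = flip i j y"
  proof -
    have "h k l 1 = (if P k l then - y$k$l else y$k$l)" if "k \<noteq> l" for k l
    proof -
      have "csqrt (m 0 k l) \<noteq> 0" using mnz[of 0 k l] that by auto
      moreover have "m 1 k l = m 0 k l" using c01 by (simp add: m_def)
      ultimately show ?thesis using \<rho>0 \<rho>1 by (simp add: h_def)
    qed
    then show ?thesis using y ij by (auto simp: Y_def flip_def vec_eq_iff edge_space_def P_def)
  qed
  have Yg: "Y \<theta> \<in> good_L TYPE('d)" if "\<theta> \<in> {0..1}" for \<theta>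
  proof (rule good_pt[OF card Sc[OF that]])
    show "Y \<theta> \<in> edge_space" using hsym by (auto simp: Y_def edge_space_def)
    have "(Y \<theta> $k$l)^2 = meas (c \<theta>) $k$l" for k l
    proof (cases "k = l")
      case True then show ?thesis by (simp add: Y_def meas_def)
    next
      case False then show ?thesis using hsq[OF that False] by (simp add: Y_def m_def)
    qed
    then show "sq_map (Y \<theta>) = meas (c \<theta>)" by (simp add: sq_map_def vec_eq_iff)
  qed
  have "path_image Y \<subseteq> good_L TYPE('d)" using Yg by (auto simp: path_image_def)
  then show ?thesis unfolding path_component_def using path Y0 Y1
    by (intro exI[of _ Y]) (auto simp: pathstart_def pathfinish_def)
qed

lemma flip_pc_S:
  assumes d2: "CARD('d::finite) \<ge> 2" and card: "CARD('n::finite) \<ge> CARD('d) + 2" and ij: "(i::'n) \<noteq> j"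
    and x: "x \<in> edge_space" and p: "Sgood (p::complex^'d^'n)" and sq: "sq_map x = meas p"
  shows "path_component (good_L TYPE('d)) x (flip i j x)"
proof -
  have card1: "CARD('n) \<ge> CARD('d) + 1" using card by simp
  obtain c :: "real \<Rightarrow> complex^'d^'n" and \<rho> where L: "path c \<and> c 0 = c 1 \<and> (\<forall>\<theta>\<in>{0..1}. Sgood (c \<theta>))
    \<and> continuous_on {0..1} \<rho> \<and> (\<forall>\<theta>\<in>{0..1}. meas (c \<theta>) $i$j = (\<rho> \<theta>)^2) \<and> \<rho> 1 = - \<rho> 0
    \<and> (\<forall>\<theta>\<in>{0..1}. \<forall>k l. k \<noteq> l \<and> \<not> ((k = i \<and> l = j) \<or> (k = j \<and> l = i)) \<longrightarrow> Re (meas (c \<theta>) $k$l) > 0)"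
    using loop_exists[OF d2 card ij] by (elim exE) (rule that)
  have L1: "path c" and L2: "c 0 = c 1" and L3: "\<And>\<theta>. \<theta> \<in> {0..1} \<Longrightarrow> Sgood (c \<theta>)"
    and L4: "continuous_on {0..1} \<rho>" and L5: "\<And>\<theta>. \<theta> \<in> {0..1} \<Longrightarrow> meas (c \<theta>) $i$j = (\<rho> \<theta>)^2"
    and L6: "\<rho> 1 = - \<rho> 0"
    and L7: "\<And>\<theta> k l. \<theta> \<in> {0..1} \<Longrightarrow> k \<noteq> l \<Longrightarrow> \<not> ((k = i \<and> l = j) \<or> (k = j \<and> l = i)) \<Longrightarrow> Re (meas (c \<theta>) $k$l) > 0"
    using L by auto
  have Sc0: "Sgood (c 0)" using L3 by simp
  obtain \<gamma> where \<gamma>: "path \<gamma>" "pathstart \<gamma> = p" "pathfinish \<gamma> = c 0" "path_image \<gamma> \<subseteq> {r. Sgood r}"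
    using S_connect[OF p Sc0] by blast
  obtain y where y: "path_component (good_L TYPE('d)) x y" "y \<in> edge_space" "sq_map y = meas (c 0)"
    using lift_pc_S[OF card1 \<gamma>(1) \<gamma>(4) x] sq \<gamma>(2,3) by (auto simp: pathstart_def pathfinish_def)
  have yf: "path_component (good_L TYPE('d)) y (flip i j y)"
    by (rule loop_flip[OF card1 ij L1 L2 L3 L4 L5 L6 L7 y(2,3)])
  have "path_component (good_L TYPE('d)) (flip i j y) (flip i j x)"
    using flip_pc[OF path_component_sym[OF y(1)] ij] .
  then show ?thesis using path_component_trans[OF path_component_trans[OF y(1) yf]] by blast
qed

lemma sign_equal:
  assumes d2: "CARD('d::finite) \<ge> 2" and card: "CARD('n::finite) \<ge> CARD('d) + 2"
    and p: "Sgood (p::complex^'d^'n)"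
  shows "x \<in> edge_space \<Longrightarrow> y \<in> edge_space \<Longrightarrow> sq_map x = meas p \<Longrightarrow> sq_map y = meas p
    \<Longrightarrow> path_component (good_L TYPE('d)) x y"
proof (induction "card {(k,l). x$k$l \<noteq> y$k$l}" arbitrary: x rule: less_induct)
  case less
  have card1: "CARD('n) \<ge> CARD('d) + 1" using card by simp
  define D where "D x' = {(k,l). x'$k$l \<noteq> y$k$l}" for x'
  show ?case
  proof (cases "D x = {}")
    case True
    then have "x = y" by (auto simp: D_def vec_eq_iff)
    moreover have "x \<in> good_L TYPE('d)" using good_pt[OF card1 p less.prems(1,3)] .
    ultimately show ?thesis by (simp add: path_component_refl)
  next
    case False
    then obtain i j where ij: "x$i$j \<noteq> y$i$j" by (auto simp: D_def)
    have sqe: "(x$k$l)^2 = (y$k$l)^2" for k l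
      using arg_cong[OF less.prems(3), of "\<lambda>z. z$k$l"] arg_cong[OF less.prems(4), of "\<lambda>z. z$k$l"]
      by (simp add: sq_map_def)
    have neq: "i \<noteq> j" using ij less.prems(1,2) by (auto simp: edge_space_def)
    have yneg: "y$i$j = - x$i$j" using sqe[of i j] ij by (auto simp: power2_eq_iff)
    define x' where "x' = flip i j x"
    have sub: "D x' \<subset> D x"
    proof
      show "D x' \<subseteq> D x"
      proof
        fix kl assume kl: "kl \<in> D x'"
        obtain k l where kl': "kl = (k, l)" by (cases kl)
        show "kl \<in> D x"
        proof (cases "(k = i \<and> l = j) \<or> (k = j \<and> l = i)")
          case True
          then have "x' $k$l = y$k$l" using yneg less.prems(1,2) neq
            by (auto simp: x'_def flip_def edge_space_def)
          then show ?thesis using kl kl' by (simp add: D_def)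
        next
          case False
          then show ?thesis using kl kl' by (auto simp: D_def x'_def flip_def)
        qed
      qed
      show "D x' \<noteq> D x"
      proof
        assume "D x' = D x"
        moreover have "(i, j) \<in> D x" using ij by (simp add: D_def)
        moreover have "(i, j) \<notin> D x'" using yneg neq by (simp add: D_def x'_def flip_def)
        ultimately show False by simp
      qed
    qed
    have "card (D x') < card (D x)" by (rule psubset_card_mono[OF _ sub]) simp
    moreover have "sq_map x' = meas p" unfolding x'_def flip_sq by (rule less.prems(3))
    moreover have "x' \<in> edge_space" unfolding x'_def using flip_edge[OF less.prems(1) neq] .
    ultimately have "path_component (good_L TYPE('d)) x' y"
      using less.hyps[of x'] less.prems(2,4) unfolding D_def by blast
    moreover have "path_component (good_L TYPE('d)) x x'"
      unfolding x'_def using flip_pc_S[OF d2 card neq less.prems(1) p less.prems(3)] .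
    ultimately show ?thesis by (rule path_component_trans[rotated])
  qed
qed

theorem lemma2p19:
  assumes "CARD('d::finite) \<ge> 2"
    and "CARD('n::finite) \<ge> CARD('d) + 2"
  shows "path_connected (good_L TYPE('d) :: (complex^'n^'n) set)"
proof -
  have card1: "CARD('n) \<ge> CARD('d) + 1" using assms(2) by simp
  have "path_component (good_L TYPE('d)) x y" if x: "x \<in> good_L TYPE('d)" and y: "y \<in> good_L TYPE('d)"
    for x y :: "complex^'n^'n"
  proof -
    obtain x' and p :: "complex^'d^'n" where X: "path_component (good_L TYPE('d)) x x'" "x' \<in> edge_space" "Sgood p" "sq_map x' = meas p"
      using reach_S[OF card1 x] by blast
    obtain y' and q :: "complex^'d^'n" where Y: "path_component (good_L TYPE('d)) y y'" "y' \<in> edge_space" "Sgood q" "sq_map y' = meas q"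
      using reach_S[OF card1 y] by blast
    obtain \<gamma> where \<gamma>: "path \<gamma>" "pathstart \<gamma> = p" "pathfinish \<gamma> = q" "path_image \<gamma> \<subseteq> {r. Sgood r}"
      using S_connect[OF X(3) Y(3)] by blast
    obtain x'' where X2: "path_component (good_L TYPE('d)) x' x''" "x'' \<in> edge_space" "sq_map x'' = meas q"
      using lift_pc_S[OF card1 \<gamma>(1) \<gamma>(4) X(2)] X(4) \<gamma>(2,3) by (auto simp: pathstart_def pathfinish_def)
    have "path_component (good_L TYPE('d)) x'' y'"
      using sign_equal[OF assms Y(3) X2(2) Y(2) X2(3) Y(4)] .
    then show ?thesis using path_component_trans[OF path_component_trans[OF path_component_trans[OF X(1) X2(1)]] path_component_sym[OF Y(1)]] by blast
  qed
  then show ?thesis unfolding path_connected_component by blast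
qed

end
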